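(* Let $(\alpha_1,\alpha_2)\in\mathbb{C}^2$ and $p_1,p_2\in\mathbb{C}[u]\setminus\{0\}$ with $p_1(u+\alpha_2/2)p_2(u+\alpha_1/2)=p_1(u-\alpha_2/2)p_2(u-\alpha_1/2)$. Then the noncommutative Kleinian fiber product $\mathcal{A}_{\alpha_1,\alpha_2}(p_1,p_2)$, with its $\mathbb{Z}^2$-gradation, is a crystalline graded ring.
   Context: $\tilde{\mathcal{A}}_{\alpha_1,\alpha_2}(p_1,p_2)$ is the $\mathbb{C}$-algebra generated by $H,X_1^\pm,X_2^\pm$ with relations ($i=1,2$) $HX_i^\pm-X_i^\pm H=\pm\alpha_iX_i^\pm$, $X_i^+X_i^-=p_i(H-\alpha_i/2)$, $X_i^-X_i^+=p_i(H+\alpha_i/2)$, $X_1^+X_2^-=X_2^-X_1^+$, $X_1^-X_2^+=X_2^+X_1^-$; $\mathcal{A}_{\alpha_1,\alpha_2}(p_1,p_2)$ is its quotient by the ideal of all $a$ with $f(H)a=0$ for some nonzero polynomial $f$. It is $\mathbb{Z}^2$-graded by $\deg H=0$, $\deg X_i^\pm=\pm\mathbf{e}_i$, with degree-zero component $\mathbb{C}[H]$. A group-graded ring $D=\bigoplus_gD_g$ is crystalline graded if each $D_g$ is free of rank one as a left and as a right $D_e$-module on a common generator $a_g\in D_g$. *)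

theory Defs
  imports "HOL-Computational_Algebra.Polynomial" "HOL-Library.Poly_Mapping"
begin

datatype gen = GH | GXp1 | GXm1 | GXp2 | GXm2

text \<open>The free associative C-algebra on the generators: finitely supported
  functions from words to complex coefficients.\<close>
type_synonym falg = "gen list \<Rightarrow>\<^sub>0 complex"

definition fmul :: "falg \<Rightarrow> falg \<Rightarrow> falg" where
  "fmul a b = (\<Sum>u\<in>Poly_Mapping.keys a. \<Sum>v\<in>Poly_Mapping.keys b.
      Poly_Mapping.single (u @ v) (Poly_Mapping.lookup a u * Poly_Mapping.lookup b v))"

definition fscal :: "complex \<Rightarrow> falg" where
  "fscal c = Poly_Mapping.single [] c"

definition fgen :: "gen \<Rightarrow> falg" where
  "fgen x = Poly_Mapping.single [x] 1"

fun fpow :: "falg \<Rightarrow> nat \<Rightarrow> falg" where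
  "fpow a 0 = fscal 1"
| "fpow a (Suc n) = fmul a (fpow a n)"

definition peval :: "complex poly \<Rightarrow> falg \<Rightarrow> falg" where
  "peval f x = (\<Sum>k\<le>degree f. fmul (fscal (coeff f k)) (fpow x k))"

abbreviation "fH \<equiv> fgen GH"

text \<open>Defining relations of \<tilde>A (each listed element is set equal to zero).\<close>
definition rels :: "complex \<Rightarrow> complex \<Rightarrow> complex poly \<Rightarrow> complex poly \<Rightarrow> falg set" where
  "rels a1 a2 p1 p2 =
    { fmul fH (fgen GXp1) - fmul (fgen GXp1) fH - fmul (fscal a1) (fgen GXp1),
      fmul fH (fgen GXm1) - fmul (fgen GXm1) fH + fmul (fscal a1) (fgen GXm1),
      fmul fH (fgen GXp2) - fmul (fgen GXp2) fH - fmul (fscal a2) (fgen GXp2),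
      fmul fH (fgen GXm2) - fmul (fgen GXm2) fH + fmul (fscal a2) (fgen GXm2),
      fmul (fgen GXp1) (fgen GXm1) - peval p1 (fH - fscal (a1 / 2)),
      fmul (fgen GXm1) (fgen GXp1) - peval p1 (fH + fscal (a1 / 2)),
      fmul (fgen GXp2) (fgen GXm2) - peval p2 (fH - fscal (a2 / 2)),
      fmul (fgen GXm2) (fgen GXp2) - peval p2 (fH + fscal (a2 / 2)),
      fmul (fgen GXp1) (fgen GXm2) - fmul (fgen GXm2) (fgen GXp1),
      fmul (fgen GXm1) (fgen GXp2) - fmul (fgen GXp2) (fgen GXm1) }"

inductive_set gen_ideal :: "falg set \<Rightarrow> falg set" for R where
  zero: "0 \<in> gen_ideal R"
| gen: "r \<in> R \<Longrightarrow> fmul (fmul a r) b \<in> gen_ideal R"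
| add: "x \<in> gen_ideal R \<Longrightarrow> y \<in> gen_ideal R \<Longrightarrow> x + y \<in> gen_ideal R"

text \<open>Kernel of the presentation of \<tilde>A: elements equal to zero in \<tilde>A.\<close>
definition Itil :: "complex \<Rightarrow> complex \<Rightarrow> complex poly \<Rightarrow> complex poly \<Rightarrow> falg set" where
  "Itil a1 a2 p1 p2 = gen_ideal (rels a1 a2 p1 p2)"

text \<open>Kernel of the presentation of A: preimage in the free algebra of the
  H-torsion ideal {a \<in> \<tilde>A. f(H) a = 0 for some nonzero polynomial f}.\<close>
definition Jker :: "complex \<Rightarrow> complex \<Rightarrow> complex poly \<Rightarrow> complex poly \<Rightarrow> falg set" where
  "Jker a1 a2 p1 p2 =
     {a. \<exists>f::complex poly. f \<noteq> 0 \<and> fmul (peval f fH) a \<in> Itil a1 a2 p1 p2}"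

fun gdeg :: "gen \<Rightarrow> int \<times> int" where
  "gdeg GH = (0, 0)"
| "gdeg GXp1 = (1, 0)"
| "gdeg GXm1 = (-1, 0)"
| "gdeg GXp2 = (0, 1)"
| "gdeg GXm2 = (0, -1)"

fun wdeg :: "gen list \<Rightarrow> int \<times> int" where
  "wdeg [] = (0, 0)"
| "wdeg (x # w) = (fst (gdeg x) + fst (wdeg w), snd (gdeg x) + snd (wdeg w))"

text \<open>Homogeneous elements of degree g of the free algebra; their images in
  the quotient form the component D_g.\<close>
definition Hom :: "int \<times> int \<Rightarrow> falg set" where
  "Hom g = {a. \<forall>w\<in>Poly_Mapping.keys a. wdeg w = g}"

text \<open>The quotient falg/J is Z^2-graded by the images of the Hom g:
  they span it (automatic) and their sum is direct.\<close>
definition graded_quot :: "falg set \<Rightarrow> bool" where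
  "graded_quot J \<longleftrightarrow>
     (\<forall>(x :: int \<times> int \<Rightarrow> falg) S. finite S \<longrightarrow> (\<forall>g\<in>S. x g \<in> Hom g) \<longrightarrow>
        (\<Sum>g\<in>S. x g) \<in> J \<longrightarrow> (\<forall>g\<in>S. x g \<in> J))"

text \<open>Crystalline graded: each D_g is free of rank one as left and as right
  D_0-module on a common generator a_g \<in> D_g (everything computed modulo J).\<close>
definition crystalline_quot :: "falg set \<Rightarrow> bool" where
  "crystalline_quot J \<longleftrightarrow> graded_quot J \<and>
     (\<forall>g. \<exists>a\<in>Hom g.
        (\<forall>d\<in>Hom g. \<exists>e\<in>Hom (0, 0). d - fmul e a \<in> J) \<and>
        (\<forall>d\<in>Hom g. \<exists>e\<in>Hom (0, 0). d - fmul a e \<in> J) \<and>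
        (\<forall>e\<in>Hom (0, 0). fmul e a \<in> J \<longrightarrow> e \<in> J) \<and>
        (\<forall>e\<in>Hom (0, 0). fmul a e \<in> J \<longrightarrow> e \<in> J))"

end

theory Submission
  imports Defs "HOL-Computational_Algebra.Polynomial_Factorial" "HOL-Computational_Algebra.Field_as_Ring"
begin


instantiation list :: (type) monoid_add
begin
definition zero_list :: "'a list" where "zero_list = []"
definition plus_list :: "'a list \<Rightarrow> 'a list \<Rightarrow> 'a list" where "plus_list = append"
instance by standard (auto simp: zero_list_def plus_list_def)
end

lemma fal_sum_single: "(a::falg) = (\<Sum>u\<in>Poly_Mapping.keys a. Poly_Mapping.single u (Poly_Mapping.lookup a u))"
  by (rule poly_mapping_eqI) (simp add: lookup_sum lookup_single when_def in_keys_iff sum.delta' split: if_splits)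

lemma fmul_eq: "fmul a b = a * b"
proof -
  have "a * b = (\<Sum>u\<in>Poly_Mapping.keys a. Poly_Mapping.single u (Poly_Mapping.lookup a u)) *
     (\<Sum>v\<in>Poly_Mapping.keys b. Poly_Mapping.single v (Poly_Mapping.lookup b v))"
    using fal_sum_single[of a] fal_sum_single[of b] by simp
  also have "\<dots> = fmul a b"
    by (simp add: fmul_def sum_distrib_left sum_distrib_right mult_single plus_list_def)
       (rule sum.swap)
  finally show ?thesis by simp
qed

abbreviation sc :: "complex \<Rightarrow> falg" where "sc c \<equiv> Poly_Mapping.single [] c"

lemma fscal_eq: "fscal c = sc c" by (simp add: fscal_def)

lemma sc_one[simp]: "sc 1 = 1"
  by (metis single_one zero_list_def)
lemma sc_zero[simp]: "sc 0 = 0" by simp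
lemma sc_mult: "sc c * sc d = sc (c * d)"
  by (simp add: mult_single plus_list_def)
lemma sc_add: "sc (c + d) = sc c + sc d" by (simp add: single_add)
lemma sc_diff: "sc (c - d) = sc c - sc d" by (simp add: single_diff)

lemma sc_central: "sc c * a = a * sc c"
proof -
  have "sc c * a = (\<Sum>u\<in>Poly_Mapping.keys a. sc c * Poly_Mapping.single u (Poly_Mapping.lookup a u))"
    by (subst fal_sum_single[of a]) (simp add: sum_distrib_left)
  also have "\<dots> = (\<Sum>u\<in>Poly_Mapping.keys a. Poly_Mapping.single u (Poly_Mapping.lookup a u) * sc c)"
    by (simp add: mult_single plus_list_def mult.commute)
  also have "\<dots> = a * sc c"
    by (subst (2) fal_sum_single[of a]) (simp add: sum_distrib_right)
  finally show ?thesis .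
qed

lemma fpow_eq: "fpow a n = a ^ n"
  by (induct n) (simp_all add: fscal_eq fmul_eq)

lemma peval_eq: "peval f x = (\<Sum>k\<le>degree f. sc (coeff f k) * x ^ k)"
  by (simp add: peval_def fscal_eq fmul_eq fpow_eq)

lemma peval_lessThan: assumes "degree f < N"
  shows "peval f x = (\<Sum>k<N. sc (coeff f k) * x ^ k)"
proof -
  have "(\<Sum>k<N. sc (coeff f k) * x ^ k) = (\<Sum>k\<in>{..degree f} \<union> {degree f<..<N}. sc (coeff f k) * x ^ k)"
    using assms by (intro sum.cong) auto
  also have "\<dots> = (\<Sum>k\<le>degree f. sc (coeff f k) * x ^ k) + (\<Sum>k\<in>{degree f<..<N}. sc (coeff f k) * x ^ k)"
    by (rule sum.union_disjoint) auto
  also have "(\<Sum>k\<in>{degree f<..<N}. sc (coeff f k) * x ^ k) = 0"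
    by (intro sum.neutral) (auto simp: coeff_eq_0)
  finally show ?thesis by (simp add: peval_eq)
qed

lemma peval_0[simp]: "peval 0 x = 0"
  by (simp add: peval_eq)

lemma peval_pCons: "peval (pCons c f) x = sc c + x * peval f x"
proof -
  define N where "N = degree f + 1"
  have 1: "degree (pCons c f) < Suc N" unfolding N_def
    by (metis Suc_eq_plus1 degree_pCons_le le_imp_less_Suc)
  have 2: "degree f < N" unfolding N_def by simp
  have "peval (pCons c f) x = (\<Sum>k<Suc N. sc (coeff (pCons c f) k) * x ^ k)"
    by (rule peval_lessThan[OF 1])
  also have "\<dots> = sc c + (\<Sum>k<N. sc (coeff f k) * x ^ Suc k)"
    by (subst sum.lessThan_Suc_shift) simp
  also have "(\<Sum>k<N. sc (coeff f k) * x ^ Suc k) = x * (\<Sum>k<N. sc (coeff f k) * x ^ k)"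
  proof -
    have "sc (coeff f k) * x ^ Suc k = x * (sc (coeff f k) * x ^ k)" for k
    proof -
      have "sc (coeff f k) * x ^ Suc k = (sc (coeff f k) * x) * x ^ k" by (simp add: mult.assoc)
      also have "\<dots> = x * (sc (coeff f k) * x ^ k)" by (simp add: sc_central mult.assoc)
      finally show ?thesis .
    qed
    then show ?thesis by (simp add: sum_distrib_left)
  qed
  also have "(\<Sum>k<N. sc (coeff f k) * x ^ k) = peval f x" by (rule peval_lessThan[OF 2, symmetric])
  finally show ?thesis .
qed

lemma peval_const[simp]: "peval [:c:] x = sc c"
  by (simp add: peval_pCons)

lemma peval_X: "peval [:0, 1:] x = x"
  by (simp add: peval_pCons)

lemma peval_add: "peval (f + g) x = peval f x + peval g x"
proof -
  define N where "N = max (degree f) (degree g) + 1"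
  have "degree (f + g) < N" "degree f < N" "degree g < N" unfolding N_def
    using degree_add_le_max[of f g] by auto
  then show ?thesis
    by (simp add: peval_lessThan[of _ N] sc_add distrib_right sum.distrib)
qed

lemma peval_smult: "peval (smult c g) x = sc c * peval g x"
proof -
  define N where "N = degree g + 1"
  have "degree (smult c g) < N" "degree g < N" unfolding N_def
    using degree_smult_le[of c g] by auto
  then show ?thesis
    by (simp add: peval_lessThan[of _ N] sum_distrib_left sc_mult flip: mult.assoc)
qed

lemma peval_mult: "peval (f * g) x = peval f x * peval g x"
proof (induct f)
  case 0 then show ?case by simp
next
  case (pCons a p)
  show ?case
    by (simp add: mult_pCons_left peval_add peval_smult peval_pCons pCons.hyps distrib_right mult.assoc)
qed

lemma peval_uminus: "peval (- f) x = - peval f x"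
  using peval_add[of f "-f" x] by (simp add: eq_neg_iff_add_eq_0 add.commute)

lemma peval_diff: "peval (f - g) x = peval f x - peval g x"
  using peval_add[of "f - g" g x] by simp

lemma peval_pcompose: "peval (pcompose p q) x = peval p (peval q x)"
  by (induct p) (simp_all add: pcompose_pCons peval_add peval_mult peval_pCons)

lemma peval_comm_x: "x * peval f x = peval f x * x"
  by (induct f) (simp_all add: peval_pCons distrib_left distrib_right sc_central flip: mult.assoc)

lemma peval_comm: "peval f x * peval g x = peval g x * peval f x"
  by (metis mult.commute peval_mult)



abbreviation wd :: "gen list \<Rightarrow> falg" where "wd w \<equiv> Poly_Mapping.single w (1::complex)"

lemma wd_Nil[simp]: "wd [] = 1"
  by (metis single_one zero_list_def)
lemma wd_Cons: "wd (x # w) = fgen x * wd w"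
  by (simp add: fgen_def mult_single plus_list_def)
lemma wd_append: "wd (u @ v) = wd u * wd v"
  by (simp add: mult_single plus_list_def)
lemma wd_single: "wd [x] = fgen x" by (simp add: fgen_def)

definition sh :: "complex \<Rightarrow> complex poly \<Rightarrow> complex poly" where
  "sh s f = pcompose f [:s, 1:]"

lemma sh_sh: "sh s (sh t f) = sh (s + t) f"
proof -
  have "pcompose [:t, 1:] [:s, 1:] = [:s + t, 1:]" by (simp add: pcompose_pCons add.commute)
  then show ?thesis unfolding sh_def by (metis pcompose_assoc)
qed
lemma sh_0[simp]: "sh 0 f = f"
  by (simp add: sh_def)
lemma sh_mult: "sh s (f * g) = sh s f * sh s g"
  by (simp add: sh_def pcompose_mult)
lemma sh_nz: "f \<noteq> 0 \<Longrightarrow> sh s f \<noteq> 0"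
  by (simp add: sh_def pcompose_eq_0_iff)
lemma sh_inv: "sh s (sh (- s) f) = f"
  by (simp add: sh_sh)
lemma sh_inv': "sh (- s) (sh s f) = f"
  by (simp add: sh_sh)
lemma sh_const[simp]: "sh s [:c:] = [:c:]"
  by (simp add: sh_def)
lemma sh_add: "sh s (f + g) = sh s f + sh s g"
  by (simp add: sh_def pcompose_add)
lemma sh_smult: "sh s (smult c f) = smult c (sh s f)"
  by (simp add: sh_def pcompose_smult)

abbreviation "hh \<equiv> fgen GH"
definition phi :: "complex poly \<Rightarrow> falg" where "phi f = peval f hh"

lemma phi_mult: "phi (f * g) = phi f * phi g" by (simp add: phi_def peval_mult)
lemma phi_add: "phi (f + g) = phi f + phi g" by (simp add: phi_def peval_add)
lemma phi_diff: "phi (f - g) = phi f - phi g" by (simp add: phi_def peval_diff)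
lemma phi_const[simp]: "phi [:c:] = sc c" by (simp add: phi_def)
lemma phi_one[simp]: "phi 1 = 1" by (simp add: phi_def one_pCons)
lemma phi_zero[simp]: "phi 0 = 0" by (simp add: phi_def)
lemma phi_comm: "phi f * phi g = phi g * phi f" by (simp add: phi_def peval_comm)
lemma phi_pCons: "phi (pCons c f) = sc c + hh * phi f" by (simp add: phi_def peval_pCons)
lemma phi_smult: "phi (smult c f) = sc c * phi f" by (simp add: phi_def peval_smult)
lemma phi_lin: "phi [:s, 1:] = sc s + hh" by (simp add: phi_pCons)
lemma phi_X: "phi [:0, 1:] = hh" by (simp add: phi_pCons)

locale kfp =
  fixes a1 a2 :: complex and p1 p2 :: "complex poly"
begin

abbreviation II where "II \<equiv> Itil a1 a2 p1 p2"

lemma II_zero: "0 \<in> II"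
  unfolding Itil_def by (rule gen_ideal.zero)
lemma II_add: "x \<in> II \<Longrightarrow> y \<in> II \<Longrightarrow> x + y \<in> II"
  unfolding Itil_def by (rule gen_ideal.add)
lemma II_gen: "r \<in> rels a1 a2 p1 p2 \<Longrightarrow> a * r * b \<in> II"
proof -
  assume "r \<in> rels a1 a2 p1 p2"
  then have "fmul (fmul a r) b \<in> gen_ideal (rels a1 a2 p1 p2)" by (rule gen_ideal.gen)
  then show ?thesis unfolding Itil_def by (simp add: fmul_eq)
qed
lemma II_rel: "r \<in> rels a1 a2 p1 p2 \<Longrightarrow> r \<in> II"
  using II_gen[of r 1 1] by simp
lemma II_left: "x \<in> II \<Longrightarrow> c * x \<in> II"
  unfolding Itil_def
proof (induct rule: gen_ideal.induct)
  case zero then show ?case by (simp add: gen_ideal.zero)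
next
  case (gen r a b)
  have "fmul (fmul (c * a) r) b \<in> gen_ideal (rels a1 a2 p1 p2)" using gen by (rule gen_ideal.gen)
  then show ?case by (simp add: fmul_eq mult.assoc)
next
  case (add x y) then show ?case by (simp add: distrib_left gen_ideal.add)
qed
lemma II_right: "x \<in> II \<Longrightarrow> x * c \<in> II"
  unfolding Itil_def
proof (induct rule: gen_ideal.induct)
  case zero then show ?case by (simp add: gen_ideal.zero)
next
  case (gen r a b)
  have "fmul (fmul a r) (b * c) \<in> gen_ideal (rels a1 a2 p1 p2)" using gen by (rule gen_ideal.gen)
  then show ?case by (simp add: fmul_eq mult.assoc)
next
  case (add x y) then show ?case by (simp add: distrib_right gen_ideal.add)
qed
lemma II_uminus: "x \<in> II \<Longrightarrow> - x \<in> II"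
  using II_left[of x "-1"] by simp
lemma II_diff: "x \<in> II \<Longrightarrow> y \<in> II \<Longrightarrow> x - y \<in> II"
  using II_add[OF _ II_uminus, of x y] by simp
lemma II_sum: "(\<And>i. i \<in> S \<Longrightarrow> f i \<in> II) \<Longrightarrow> sum f S \<in> II"
  by (induct S rule: infinite_finite_induct) (auto simp: II_zero II_add)

definition ceq :: "falg \<Rightarrow> falg \<Rightarrow> bool" (infix "\<approx>" 50) where
  "x \<approx> y \<longleftrightarrow> x - y \<in> II"

lemma ceq_refl[simp]: "x \<approx> x" by (simp add: ceq_def II_zero)
lemma ceq_eq: "x = y \<Longrightarrow> x \<approx> y" by simp
lemma ceq_sym: "x \<approx> y \<Longrightarrow> y \<approx> x"
  unfolding ceq_def using II_uminus by fastforce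
lemma ceq_trans[trans]: "x \<approx> y \<Longrightarrow> y \<approx> z \<Longrightarrow> x \<approx> z"
  unfolding ceq_def using II_add by fastforce
lemma ceq_add: "a \<approx> b \<Longrightarrow> c \<approx> d \<Longrightarrow> a + c \<approx> b + d"
  unfolding ceq_def using II_add by (fastforce simp: algebra_simps)
lemma ceq_diff: "a \<approx> b \<Longrightarrow> c \<approx> d \<Longrightarrow> a - c \<approx> b - d"
  unfolding ceq_def using II_diff by (fastforce simp: algebra_simps)
lemma ceq_mult: "a \<approx> b \<Longrightarrow> c \<approx> d \<Longrightarrow> a * c \<approx> b * d"
proof -
  assume "a \<approx> b" "c \<approx> d"
  then have "(a - b) * c \<in> II" "b * (c - d) \<in> II" unfolding ceq_def using II_left II_right by auto
  then have "(a - b) * c + b * (c - d) \<in> II" by (rule II_add)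
  then show ?thesis unfolding ceq_def by (simp add: algebra_simps)
qed
lemma ceq_multL: "c \<approx> d \<Longrightarrow> a * c \<approx> a * d" by (simp add: ceq_mult)
lemma ceq_multR: "a \<approx> b \<Longrightarrow> a * c \<approx> b * c" by (simp add: ceq_mult)
lemma ceq_sum: "(\<And>i. i \<in> S \<Longrightarrow> f i \<approx> g i) \<Longrightarrow> sum f S \<approx> sum g S"
  by (induct S rule: infinite_finite_induct) (auto simp: ceq_add)

abbreviation "x1 \<equiv> fgen GXp1"
abbreviation "y1 \<equiv> fgen GXm1"
abbreviation "x2 \<equiv> fgen GXp2"
abbreviation "y2 \<equiv> fgen GXm2"

lemma rel_in: "r \<in> rels a1 a2 p1 p2 \<Longrightarrow> r \<in> II" by (rule II_rel)

lemma pev_shift: "peval p (hh - sc c) = phi (sh (- c) p)"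
  "peval p (hh + sc c) = phi (sh c p)"
  by (simp_all add: phi_def sh_def peval_pcompose peval_pCons sc_diff add.commute diff_conv_add_uminus
      flip: single_uminus)

lemma R_h: "hh * fgen x \<approx> fgen x * (hh + sc (of_int (fst (gdeg x)) * a1 + of_int (snd (gdeg x)) * a2))"
proof (cases x)
  case GH then show ?thesis by simp
next
  case GXp1
  then have "hh * x1 - x1 * hh - sc a1 * x1 \<in> II" using rel_in by (simp add: rels_def fmul_eq fscal_eq)
  then show ?thesis using GXp1 sc_central[of a1 x1] by (simp add: ceq_def algebra_simps)
next
  case GXm1
  then have "hh * y1 - y1 * hh + sc a1 * y1 \<in> II" using rel_in by (simp add: rels_def fmul_eq fscal_eq)
  then show ?thesis using GXm1 sc_central[of a1 y1] by (simp add: ceq_def algebra_simps single_uminus)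
next
  case GXp2
  then have "hh * x2 - x2 * hh - sc a2 * x2 \<in> II" using rel_in by (simp add: rels_def fmul_eq fscal_eq)
  then show ?thesis using GXp2 sc_central[of a2 x2] by (simp add: ceq_def algebra_simps)
next
  case GXm2
  then have "hh * y2 - y2 * hh + sc a2 * y2 \<in> II" using rel_in by (simp add: rels_def fmul_eq fscal_eq)
  then show ?thesis using GXm2 sc_central[of a2 y2] by (simp add: ceq_def algebra_simps single_uminus)
qed

lemma R_11: "x1 * y1 \<approx> phi (sh (- (a1/2)) p1)" 
  using rel_in[of "fmul (fgen GXp1) (fgen GXm1) - peval p1 (fH - fscal (a1 / 2))"]
  by (simp add: rels_def ceq_def fmul_eq fscal_eq pev_shift)
lemma R_11': "y1 * x1 \<approx> phi (sh (a1/2) p1)" 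
  using rel_in[of "fmul (fgen GXm1) (fgen GXp1) - peval p1 (fH + fscal (a1 / 2))"]
  by (simp add: rels_def ceq_def fmul_eq fscal_eq pev_shift)
lemma R_22: "x2 * y2 \<approx> phi (sh (- (a2/2)) p2)" 
  using rel_in[of "fmul (fgen GXp2) (fgen GXm2) - peval p2 (fH - fscal (a2 / 2))"]
  by (simp add: rels_def ceq_def fmul_eq fscal_eq pev_shift)
lemma R_22': "y2 * x2 \<approx> phi (sh (a2/2) p2)" 
  using rel_in[of "fmul (fgen GXm2) (fgen GXp2) - peval p2 (fH + fscal (a2 / 2))"]
  by (simp add: rels_def ceq_def fmul_eq fscal_eq pev_shift)
lemma R_c1: "x1 * y2 \<approx> y2 * x1" 
  using rel_in[of "fmul (fgen GXp1) (fgen GXm2) - fmul (fgen GXm2) (fgen GXp1)"]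
  by (simp add: rels_def ceq_def fmul_eq)
lemma R_c2: "y1 * x2 \<approx> x2 * y1" 
  using rel_in[of "fmul (fgen GXm1) (fgen GXp2) - fmul (fgen GXp2) (fgen GXm1)"]
  by (simp add: rels_def ceq_def fmul_eq)

end


lemma sum_single_wd: "(a::falg) = (\<Sum>w\<in>Poly_Mapping.keys a. sc (Poly_Mapping.lookup a w) * wd w)"
  by (subst fal_sum_single) (simp add: mult_single plus_list_def)

context kfp
begin

definition dsh :: "int \<times> int \<Rightarrow> complex" where
  "dsh g = of_int (fst g) * a1 + of_int (snd g) * a2"

lemma R_h': "hh * fgen x \<approx> fgen x * (hh + sc (dsh (gdeg x)))"
  using R_h[of x] by (simp add: dsh_def)

lemma gen_comm:
  assumes "hh * X \<approx> X * (hh + sc s)"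
  shows "phi f * X \<approx> X * phi (sh s f)"
proof (induct f)
  case 0 then show ?case by (simp add: sh_def)
next
  case (pCons c f)
  have "phi (pCons c f) * X = sc c * X + hh * (phi f * X)"
    by (simp add: phi_pCons distrib_right mult.assoc)
  also have "\<dots> \<approx> sc c * X + hh * (X * phi (sh s f))"
    by (intro ceq_add ceq_multL pCons.hyps ceq_refl)
  also have "\<dots> = sc c * X + (hh * X) * phi (sh s f)" by (simp add: mult.assoc)
  also have "\<dots> \<approx> sc c * X + (X * (hh + sc s)) * phi (sh s f)"
    by (intro ceq_add ceq_multR assms ceq_refl)
  also have "\<dots> = X * (sc c + (sc s + hh) * phi (sh s f))"
    by (simp add: distrib_left distrib_right mult.assoc sc_central[of c X] add_ac)
  also have "sc c + (sc s + hh) * phi (sh s f) = phi (sh s (pCons c f))"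
    by (simp only: sh_def pcompose_pCons phi_add phi_mult phi_lin phi_const)
  finally show ?case .
qed

lemma dsh_add[simp]: "dsh (fst a + fst b, snd a + snd b) = dsh a + dsh b"
  by (simp add: dsh_def algebra_simps)

lemma dsh_cons: "dsh (wdeg (x # w)) = dsh (gdeg x) + dsh (wdeg w)"
  by (simp add: dsh_def algebra_simps)

lemma wd_h: "hh * wd w \<approx> wd w * (hh + sc (dsh (wdeg w)))"
proof (induct w)
  case Nil then show ?case by (simp add: dsh_def)
next
  case (Cons x w)
  have "hh * wd (x # w) = (hh * fgen x) * wd w" by (simp add: wd_Cons mult.assoc)
  also have "\<dots> \<approx> (fgen x * (hh + sc (dsh (gdeg x)))) * wd w"
    by (intro ceq_multR R_h')
  also have "\<dots> = fgen x * (hh * wd w) + fgen x * wd w * sc (dsh (gdeg x))"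
    by (simp add: distrib_left distrib_right mult.assoc sc_central[of _ "wd w"])
  also have "\<dots> \<approx> fgen x * (wd w * (hh + sc (dsh (wdeg w)))) + fgen x * wd w * sc (dsh (gdeg x))"
    by (intro ceq_add ceq_multL Cons ceq_refl)
  also have "\<dots> = wd (x # w) * (hh + sc (dsh (wdeg (x # w))))"
    by (simp add: wd_Cons sc_add distrib_left mult.assoc add_ac)
  finally show ?case .
qed

lemma phi_wd: "phi f * wd w \<approx> wd w * phi (sh (dsh (wdeg w)) f)"
  by (rule gen_comm[OF wd_h])

lemma wd_phi: "wd w * phi f \<approx> phi (sh (- dsh (wdeg w)) f) * wd w"
  using phi_wd[of "sh (- dsh (wdeg w)) f" w] by (simp add: sh_inv ceq_sym)

lemma phi_gen: "phi f * fgen x \<approx> fgen x * phi (sh (dsh (gdeg x)) f)"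
  by (rule gen_comm[OF R_h'])

lemma gen_phi: "fgen x * phi f \<approx> phi (sh (- dsh (gdeg x)) f) * fgen x"
  using phi_gen[of "sh (- dsh (gdeg x)) f" x] by (simp add: sh_inv ceq_sym)

lemma hom_h: assumes "d \<in> Hom g" shows "hh * d \<approx> d * (hh + sc (dsh g))"
proof -
  have "hh * d = (\<Sum>w\<in>Poly_Mapping.keys d. sc (Poly_Mapping.lookup d w) * (hh * wd w))"
    by (subst sum_single_wd) (simp add: sum_distrib_left sc_central[of _ hh, symmetric] flip: mult.assoc)
  also have "\<dots> \<approx> (\<Sum>w\<in>Poly_Mapping.keys d. sc (Poly_Mapping.lookup d w) * (wd w * (hh + sc (dsh g))))"
  proof (rule ceq_sum)
    fix w assume "w \<in> Poly_Mapping.keys d"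
    then have "wdeg w = g" using assms by (simp add: Hom_def)
    then show "sc (Poly_Mapping.lookup d w) * (hh * wd w) \<approx> sc (Poly_Mapping.lookup d w) * (wd w * (hh + sc (dsh g)))"
      using wd_h[of w] by (intro ceq_multL) simp
  qed
  also have "\<dots> = d * (hh + sc (dsh g))"
    by (subst (2) sum_single_wd) (simp add: sum_distrib_right mult.assoc)
  finally show ?thesis .
qed

lemma phi_hom: "d \<in> Hom g \<Longrightarrow> phi f * d \<approx> d * phi (sh (dsh g) f)"
  by (rule gen_comm[OF hom_h])

lemma hom_phi: "d \<in> Hom g \<Longrightarrow> d * phi f \<approx> phi (sh (- dsh g) f) * d"
  using phi_hom[of d g "sh (- dsh g) f"] by (simp add: sh_inv ceq_sym)

definition TT :: "falg set" where "TT = {a. \<exists>f. f \<noteq> 0 \<and> phi f * a \<in> II}"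

lemma Jker_eq: "Jker a1 a2 p1 p2 = TT"
  by (simp add: Jker_def TT_def fmul_eq phi_def)

lemma TT_I: "f \<noteq> 0 \<Longrightarrow> phi f * a \<in> II \<Longrightarrow> a \<in> TT"
  unfolding TT_def by blast

lemma TT_E: "a \<in> TT \<Longrightarrow> (\<And>f. f \<noteq> 0 \<Longrightarrow> phi f * a \<in> II \<Longrightarrow> P) \<Longrightarrow> P"
  unfolding TT_def by blast

lemma II_TT: "a \<in> II \<Longrightarrow> a \<in> TT"
  by (rule TT_I[of 1]) simp_all

lemma TT_zero: "0 \<in> TT" by (rule II_TT[OF II_zero])

lemma TT_add: assumes "a \<in> TT" "b \<in> TT" shows "a + b \<in> TT"
proof -
  obtain f where f: "f \<noteq> 0" "phi f * a \<in> II" using assms(1) by (rule TT_E)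
  obtain g where g: "g \<noteq> 0" "phi g * b \<in> II" using assms(2) by (rule TT_E)
  have "phi g * (phi f * a) + phi f * (phi g * b) \<in> II"
    using II_add[OF II_left[OF f(2)] II_left[OF g(2)]] .
  then have "phi (g * f) * (a + b) \<in> II"
    by (simp add: phi_mult distrib_left mult.assoc phi_comm[of g f] flip: mult.assoc)
  then show ?thesis using f g by (intro TT_I[of "g * f"]) simp_all
qed

lemma TT_right: assumes "a \<in> TT" shows "a * c \<in> TT"
proof -
  obtain f where f: "f \<noteq> 0" "phi f * a \<in> II" using assms by (rule TT_E)
  have "phi f * a * c \<in> II" using f(2) by (rule II_right)
  then show ?thesis using f(1) by (intro TT_I[of f]) (simp_all add: mult.assoc)
qed

lemma TT_phi: assumes "a \<in> TT" shows "phi q * a \<in> TT"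
proof -
  obtain f where f: "f \<noteq> 0" "phi f * a \<in> II" using assms by (rule TT_E)
  have "phi q * (phi f * a) \<in> II" using f(2) by (rule II_left)
  then have "phi f * (phi q * a) \<in> II" by (simp add: phi_comm[of q f] flip: mult.assoc)
  then show ?thesis using f(1) by (intro TT_I[of f])
qed

lemma TT_sc: "a \<in> TT \<Longrightarrow> sc c * a \<in> TT"
  using TT_phi[of a "[:c:]"] by simp

lemma TT_uminus: assumes "a \<in> TT" shows "- a \<in> TT"
proof -
  have "sc (-1) * a \<in> TT" using assms by (rule TT_sc)
  then show ?thesis by (simp add: single_uminus)
qed

lemma TT_diff: "a \<in> TT \<Longrightarrow> b \<in> TT \<Longrightarrow> a - b \<in> TT"
  using TT_add[OF _ TT_uminus, of a b] by simp

lemma TT_sum: "(\<And>i. i \<in> S \<Longrightarrow> f i \<in> TT) \<Longrightarrow> sum f S \<in> TT"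
  by (induct S rule: infinite_finite_induct) (auto simp: TT_zero TT_add)

lemma TT_ceq: assumes "a \<approx> b" "b \<in> TT" shows "a \<in> TT"
proof -
  have "a - b \<in> II" using assms(1) unfolding ceq_def .
  then have "(a - b) + b \<in> TT" using assms(2) by (rule TT_add[OF II_TT])
  then show ?thesis by simp
qed

lemma TT_cancel: assumes "f \<noteq> 0" "phi f * a \<in> TT" shows "a \<in> TT"
proof -
  obtain g where g: "g \<noteq> 0" "phi g * (phi f * a) \<in> II" using assms(2) by (rule TT_E)
  then show ?thesis using assms(1) by (intro TT_I[of "g * f"]) (simp_all add: phi_mult mult.assoc)
qed

lemma TT_gen: "a \<in> TT \<Longrightarrow> fgen x * a \<in> TT"
proof (elim TT_E)
  fix f assume f: "f \<noteq> 0" "phi f * a \<in> II"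
  have "fgen x * (phi f * a) \<in> II" using f(2) by (rule II_left)
  moreover have "(fgen x * phi f - phi (sh (- dsh (gdeg x)) f) * fgen x) * a \<in> II"
    using gen_phi[of x f] unfolding ceq_def by (rule II_right)
  ultimately have "fgen x * (phi f * a) - (fgen x * phi f - phi (sh (- dsh (gdeg x)) f) * fgen x) * a \<in> II"
    by (rule II_diff)
  then have "phi (sh (- dsh (gdeg x)) f) * fgen x * a \<in> II"
    by (simp add: algebra_simps)
  then show ?thesis using sh_nz[OF f(1)] by (intro TT_I) (simp_all add: mult.assoc)
qed

end


definition nf :: "gen list \<Rightarrow> bool" where
  "nf s \<longleftrightarrow> GH \<notin> set s \<and> \<not> (GXp1 \<in> set s \<and> GXm1 \<in> set s) \<and> \<not> (GXp2 \<in> set s \<and> GXm2 \<in> set s)"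

fun opp :: "gen \<Rightarrow> gen" where
  "opp GH = GH" | "opp GXp1 = GXm1" | "opp GXm1 = GXp1" | "opp GXp2 = GXm2" | "opp GXm2 = GXp2"

definition commg :: "gen \<Rightarrow> gen \<Rightarrow> bool" where
  "commg x y \<longleftrightarrow> {x, y} = {GXp1, GXm2} \<or> {x, y} = {GXm1, GXp2}"

lemma wdeg_append: "wdeg (u @ v) = (fst (wdeg u) + fst (wdeg v), snd (wdeg u) + snd (wdeg v))"
  by (induct u) auto

lemma gdeg_opp: "gdeg (opp x) = (- fst (gdeg x), - snd (gdeg x))"
  by (cases x) auto

lemma nf_Cons: "nf (x # s) \<Longrightarrow> nf s"
  by (auto simp: nf_def)

lemma nf_subset: "nf s \<Longrightarrow> set t \<subseteq> set s \<Longrightarrow> nf t"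
  by (auto simp: nf_def)

lemma fst_nonneg: "GXm1 \<notin> set s \<Longrightarrow> fst (wdeg s) \<ge> 0"
proof (induct s)
  case (Cons x s) then show ?case by (cases x) auto
qed simp
lemma fst_nonpos: "GXp1 \<notin> set s \<Longrightarrow> fst (wdeg s) \<le> 0"
proof (induct s)
  case (Cons x s) then show ?case by (cases x) auto
qed simp
lemma snd_nonneg: "GXm2 \<notin> set s \<Longrightarrow> snd (wdeg s) \<ge> 0"
proof (induct s)
  case (Cons x s) then show ?case by (cases x) auto
qed simp
lemma snd_nonpos: "GXp2 \<notin> set s \<Longrightarrow> snd (wdeg s) \<le> 0"
proof (induct s)
  case (Cons x s) then show ?case by (cases x) auto
qed simp

lemma nf_length: "nf s \<Longrightarrow> length s = nat \<bar>fst (wdeg s)\<bar> + nat \<bar>snd (wdeg s)\<bar>"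
proof (induct s)
  case Nil then show ?case by simp
next
  case (Cons x s)
  then have IH: "length s = nat \<bar>fst (wdeg s)\<bar> + nat \<bar>snd (wdeg s)\<bar>" using nf_Cons by blast
  show ?case
  proof (cases x)
    case GH then show ?thesis using Cons.prems by (simp add: nf_def)
  next
    case GXp1
    then have "GXm1 \<notin> set s" using Cons.prems by (auto simp: nf_def)
    then show ?thesis using fst_nonneg[of s] IH GXp1 by auto
  next
    case GXm1
    then have "GXp1 \<notin> set s" using Cons.prems by (auto simp: nf_def)
    then show ?thesis using fst_nonpos[of s] IH GXm1 by auto
  next
    case GXp2
    then have "GXm2 \<notin> set s" using Cons.prems by (auto simp: nf_def)
    then show ?thesis using snd_nonneg[of s] IH GXp2 by auto
  next
    case GXm2
    then have "GXp2 \<notin> set s" using Cons.prems by (auto simp: nf_def)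
    then show ?thesis using snd_nonpos[of s] IH GXm2 by auto
  qed
qed

lemma nf_zero: "nf s \<Longrightarrow> wdeg s = (0, 0) \<Longrightarrow> s = []"
  using nf_length[of s] by simp

lemma UNIV_gen: "(UNIV :: gen set) = {GH, GXp1, GXm1, GXp2, GXm2}"
  using gen.exhaust by auto

lemma finite_nf: "finite {s. nf s \<and> wdeg s = g}"
proof -
  have "{s. nf s \<and> wdeg s = g} \<subseteq> {s. set s \<subseteq> UNIV \<and> length s = nat \<bar>fst g\<bar> + nat \<bar>snd g\<bar>}"
    using nf_length by auto
  moreover have "finite {s. set s \<subseteq> (UNIV :: gen set) \<and> length s = nat \<bar>fst g\<bar> + nat \<bar>snd g\<bar>}"
    by (rule finite_lists_length_eq) (simp add: UNIV_gen)
  ultimately show ?thesis by (rule finite_subset)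
qed

lemma commg_facts: "commg GXp1 GXm2" "commg GXm2 GXp1" "commg GXm1 GXp2" "commg GXp2 GXm1"
  unfolding commg_def by (simp_all add: insert_commute)

lemma two_letters: "(\<forall>y\<in>A. y = u \<or> y = v) \<Longrightarrow> \<not> (u \<in> A \<and> v \<in> A) \<Longrightarrow>
  (\<forall>y\<in>A. y = u) \<or> (\<forall>y\<in>A. y = v)"
proof -
  assume a: "\<forall>y\<in>A. y = u \<or> y = v" "\<not> (u \<in> A \<and> v \<in> A)"
  show ?thesis
  proof (cases "u \<in> A")
    case True
    then have "v \<notin> A" using a(2) by simp
    then have "\<forall>y\<in>A. y = u" using a(1) by fastforce
    then show ?thesis ..
  next
    case False
    then have "\<forall>y\<in>A. y = v" using a(1) by fastforce
    then show ?thesis ..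
  qed
qed

lemma pre_cases:
  assumes "nf s" "x \<noteq> GH" "s = pre @ opp x # post" "opp x \<notin> set pre" "x \<notin> set s"
  shows "(\<forall>y\<in>set pre. commg x y) \<or> (\<forall>y\<in>set pre. commg (opp x) y)"
proof -
  have sub: "set pre \<subseteq> set s" using assms(3) by auto
  have nH: "GH \<notin> set pre" using assms(1) sub by (auto simp: nf_def)
  have xp: "x \<notin> set pre" using assms(5) sub by auto
  show ?thesis
  proof (cases x)
    case GH then show ?thesis using assms(2) by simp
  next
    case GXp1
    have "\<forall>y\<in>set pre. y = GXp2 \<or> y = GXm2"
    proof
      fix y assume yp: "y \<in> set pre"
      have "y \<noteq> GH" "y \<noteq> x" "y \<noteq> opp x" using yp nH xp assms(4) by auto
      then show "y = GXp2 \<or> y = GXm2" using GXp1 by (cases y) simp_all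
    qed
    moreover have "\<not> (GXp2 \<in> set pre \<and> GXm2 \<in> set pre)" using assms(1) sub by (auto simp: nf_def)
    ultimately show ?thesis using GXp1 by (metis two_letters commg_facts opp.simps)
  next
    case GXm1
    have "\<forall>y\<in>set pre. y = GXp2 \<or> y = GXm2"
    proof
      fix y assume yp: "y \<in> set pre"
      have "y \<noteq> GH" "y \<noteq> x" "y \<noteq> opp x" using yp nH xp assms(4) by auto
      then show "y = GXp2 \<or> y = GXm2" using GXm1 by (cases y) simp_all
    qed
    moreover have "\<not> (GXp2 \<in> set pre \<and> GXm2 \<in> set pre)" using assms(1) sub by (auto simp: nf_def)
    ultimately show ?thesis using GXm1 by (metis two_letters commg_facts opp.simps)
  next
    case GXp2
    have "\<forall>y\<in>set pre. y = GXp1 \<or> y = GXm1"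
    proof
      fix y assume yp: "y \<in> set pre"
      have "y \<noteq> GH" "y \<noteq> x" "y \<noteq> opp x" using yp nH xp assms(4) by auto
      then show "y = GXp1 \<or> y = GXm1" using GXp2 by (cases y) simp_all
    qed
    moreover have "\<not> (GXp1 \<in> set pre \<and> GXm1 \<in> set pre)" using assms(1) sub by (auto simp: nf_def)
    ultimately show ?thesis using GXp2 by (metis two_letters commg_facts opp.simps)
  next
    case GXm2
    have "\<forall>y\<in>set pre. y = GXp1 \<or> y = GXm1"
    proof
      fix y assume yp: "y \<in> set pre"
      have "y \<noteq> GH" "y \<noteq> x" "y \<noteq> opp x" using yp nH xp assms(4) by auto
      then show "y = GXp1 \<or> y = GXm1" using GXm2 by (cases y) simp_all
    qed
    moreover have "\<not> (GXp1 \<in> set pre \<and> GXm1 \<in> set pre)" using assms(1) sub by (auto simp: nf_def)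
    ultimately show ?thesis using GXm2 by (metis two_letters commg_facts opp.simps)
  qed
qed

context kfp
begin

fun cq :: "gen \<Rightarrow> complex poly" where
  "cq GH = 1"
| "cq GXp1 = sh (- (a1/2)) p1"
| "cq GXm1 = sh (a1/2) p1"
| "cq GXp2 = sh (- (a2/2)) p2"
| "cq GXm2 = sh (a2/2) p2"

lemma cq_nz: "p1 \<noteq> 0 \<Longrightarrow> p2 \<noteq> 0 \<Longrightarrow> cq x \<noteq> 0"
  by (cases x) (auto simp: sh_nz)

lemma contr: "x \<noteq> GH \<Longrightarrow> fgen x * fgen (opp x) \<approx> phi (cq x)"
  by (cases x) (auto simp: R_11 R_11' R_22 R_22')

lemma commg_ceq: "commg x y \<Longrightarrow> fgen x * fgen y \<approx> fgen y * fgen x"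
  unfolding commg_def doubleton_eq_iff
  using R_c1 R_c2 ceq_sym by auto

lemma comm_list: "(\<And>y. y \<in> set pre \<Longrightarrow> commg z y) \<Longrightarrow> fgen z * wd pre \<approx> wd pre * fgen z"
proof (induct pre)
  case Nil then show ?case by simp
next
  case (Cons y pre)
  have "fgen z * wd (y # pre) = (fgen z * fgen y) * wd pre" by (simp add: wd_Cons mult.assoc)
  also have "\<dots> \<approx> (fgen y * fgen z) * wd pre" using Cons.prems by (intro ceq_multR commg_ceq) simp
  also have "\<dots> = fgen y * (fgen z * wd pre)" by (simp add: mult.assoc)
  also have "\<dots> \<approx> fgen y * (wd pre * fgen z)" using Cons by (intro ceq_multL) simp
  also have "\<dots> = wd (y # pre) * fgen z" by (simp add: wd_Cons mult.assoc)
  finally show ?case .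
qed

lemma phi_gen': "phi (sh (- dsh (gdeg y)) f) * fgen y \<approx> fgen y * phi f"
  using phi_gen[of "sh (- dsh (gdeg y)) f" y] by (simp add: sh_inv)

lemma phi_wd': "phi (sh (- dsh (wdeg w)) f) * wd w \<approx> wd w * phi f"
  using phi_wd[of "sh (- dsh (wdeg w)) f" w] by (simp add: sh_inv)

lemma prepend:
  assumes "nf s"
  shows "\<exists>c s'. nf s' \<and> wdeg s' = wdeg (x # s) \<and> fgen x * wd s \<approx> phi c * wd s'"
proof (cases "x = GH")
  case True
  then show ?thesis using assms by (intro exI[of _ "[:0, 1:]"] exI[of _ s]) (simp add: phi_X)
next
  case xH: False
  show ?thesis
  proof (cases "opp x \<in> set s")
    case False
    then have "nf (x # s)" using assms xH by (cases x) (simp_all add: nf_def)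
    then show ?thesis by (intro exI[of _ 1] exI[of _ "x # s"]) (simp add: wd_Cons)
  next
    case True
    then obtain pre post where s: "s = pre @ opp x # post" and npre: "opp x \<notin> set pre"
      by (metis split_list_first)
    have xs: "x \<notin> set s" using assms True xH by (cases x) (simp_all add: nf_def)
    have cases: "(\<forall>y\<in>set pre. commg x y) \<or> (\<forall>y\<in>set pre. commg (opp x) y)"
      by (rule pre_cases[OF assms xH s npre xs])
    have nf': "nf (pre @ post)" by (rule nf_subset[OF assms]) (simp add: s subset_iff)
    have deg': "wdeg (pre @ post) = wdeg (x # s)"
      by (simp add: s wdeg_append gdeg_opp)
    have key: "fgen x * wd s \<approx> phi (sh (- dsh (wdeg pre)) (cq x)) * wd (pre @ post)
             \<or> fgen x * wd s \<approx> phi (cq x) * wd (pre @ post)"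
    proof (cases "\<forall>y\<in>set pre. commg x y")
      case True
      have "fgen x * wd s = (fgen x * wd pre) * (fgen (opp x) * wd post)"
        by (simp add: s wd_append wd_Cons mult.assoc)
      also have "\<dots> \<approx> (wd pre * fgen x) * (fgen (opp x) * wd post)"
        using True by (intro ceq_multR comm_list) auto
      also have "\<dots> = wd pre * (fgen x * fgen (opp x)) * wd post" by (simp add: mult.assoc)
      also have "\<dots> \<approx> wd pre * phi (cq x) * wd post"
        by (intro ceq_multR ceq_multL contr xH)
      also have "\<dots> \<approx> phi (sh (- dsh (wdeg pre)) (cq x)) * wd pre * wd post"
        by (intro ceq_multR ceq_sym[OF phi_wd'])
      also have "\<dots> = phi (sh (- dsh (wdeg pre)) (cq x)) * wd (pre @ post)"
        by (simp add: wd_append mult.assoc)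
      finally show ?thesis by blast
    next
      case False
      then have C: "\<forall>y\<in>set pre. commg (opp x) y" using cases by blast
      have "fgen x * wd s = fgen x * ((wd pre * fgen (opp x)) * wd post)"
        by (simp add: s wd_append wd_Cons mult.assoc)
      also have "\<dots> \<approx> fgen x * ((fgen (opp x) * wd pre) * wd post)"
        using C by (intro ceq_multR ceq_multL ceq_sym[OF comm_list]) auto
      also have "\<dots> = (fgen x * fgen (opp x)) * wd (pre @ post)"
        by (simp add: wd_append mult.assoc)
      also have "\<dots> \<approx> phi (cq x) * wd (pre @ post)"
        by (intro ceq_multR contr xH)
      finally show ?thesis by blast
    qed
    then show ?thesis using nf' deg' by blast
  qed
qed

lemma reduce: "\<exists>c s. nf s \<and> wdeg s = wdeg w \<and> wd w \<approx> phi c * wd s"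
proof (induct w)
  case Nil then show ?case by (intro exI[of _ 1] exI[of _ "[]"]) (simp add: nf_def)
next
  case (Cons x w)
  then obtain c s where cs: "nf s" "wdeg s = wdeg w" "wd w \<approx> phi c * wd s" by blast
  obtain c' s' where cs': "nf s'" "wdeg s' = wdeg (x # s)" "fgen x * wd s \<approx> phi c' * wd s'"
    using prepend[OF cs(1)] by blast
  have "wd (x # w) = fgen x * wd w" by (simp add: wd_Cons)
  also have "\<dots> \<approx> (fgen x * phi c) * wd s" by (simp add: ceq_multL cs(3) mult.assoc)
  also have "\<dots> \<approx> (phi (sh (- dsh (gdeg x)) c) * fgen x) * wd s"
    by (intro ceq_multR gen_phi)
  also have "\<dots> = phi (sh (- dsh (gdeg x)) c) * (fgen x * wd s)" by (simp add: mult.assoc)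
  also have "\<dots> \<approx> phi (sh (- dsh (gdeg x)) c) * (phi c' * wd s')" by (intro ceq_multL cs'(3))
  also have "\<dots> = phi (sh (- dsh (gdeg x)) c * c') * wd s'" by (simp add: phi_mult mult.assoc)
  finally have "wd (x # w) \<approx> phi (sh (- dsh (gdeg x)) c * c') * wd s'" .
  moreover have "wdeg s' = wdeg (x # w)" using cs'(2) cs(2) by simp
  ultimately show ?case using cs'(1) by blast
qed

end


definition L1 :: "int \<times> int \<Rightarrow> gen" where "L1 g = (if fst g \<ge> 0 then GXp1 else GXm1)"
definition L2 :: "int \<times> int \<Rightarrow> gen" where "L2 g = (if snd g \<ge> 0 then GXp2 else GXm2)"
definition M :: "int \<times> int \<Rightarrow> gen list" where
  "M g = replicate (nat \<bar>fst g\<bar>) (L1 g) @ replicate (nat \<bar>snd g\<bar>) (L2 g)"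

lemma wdeg_rep: "wdeg (replicate k x) = (int k * fst (gdeg x), int k * snd (gdeg x))"
  by (induct k) (auto simp: algebra_simps)

lemma wdeg_M: "wdeg (M g) = g"
  by (cases g) (auto simp: M_def L1_def L2_def wdeg_append wdeg_rep)

lemma nf_M: "nf (M g)"
  by (auto simp: M_def L1_def L2_def nf_def)

lemma M_0: "M (0, 0) = []" by (simp add: M_def)

lemma rep_L1_neg: "m \<le> 0 \<Longrightarrow> replicate (nat \<bar>m\<bar>) (L1 (m, n)) = replicate (nat \<bar>m\<bar>) GXm1"
  by (cases "m = 0") (auto simp: L1_def)
lemma rep_L2_neg: "n \<le> 0 \<Longrightarrow> replicate (nat \<bar>n\<bar>) (L2 (m, n)) = replicate (nat \<bar>n\<bar>) GXm2"
  by (cases "n = 0") (auto simp: L2_def)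

lemma M_p1: "m \<ge> 0 \<Longrightarrow> M (1 + m, n) = GXp1 # M (m, n)"
proof -
  assume "m \<ge> 0"
  then have "nat \<bar>1 + m\<bar> = Suc (nat \<bar>m\<bar>)" by simp
  then show ?thesis using \<open>m \<ge> 0\<close> by (simp add: M_def L1_def L2_def)
qed
lemma M_m1: "m \<le> 0 \<Longrightarrow> M (- 1 + m, n) = GXm1 # M (m, n)"
proof -
  assume a: "m \<le> 0"
  then have "nat \<bar>- 1 + m\<bar> = Suc (nat \<bar>m\<bar>)" by simp
  then show ?thesis using a rep_L1_neg[OF a, of n] by (simp add: M_def L1_def L2_def)
qed
lemma M_p2: "n \<ge> 0 \<Longrightarrow> M (m, 1 + n) = replicate (nat \<bar>m\<bar>) (L1 (m, n)) @ GXp2 # replicate (nat \<bar>n\<bar>) GXp2"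
  "n \<ge> 0 \<Longrightarrow> M (m, n) = replicate (nat \<bar>m\<bar>) (L1 (m, n)) @ replicate (nat \<bar>n\<bar>) GXp2"
proof -
  assume a: "n \<ge> 0"
  then have "nat \<bar>1 + n\<bar> = Suc (nat \<bar>n\<bar>)" by simp
  then show "M (m, 1 + n) = replicate (nat \<bar>m\<bar>) (L1 (m, n)) @ GXp2 # replicate (nat \<bar>n\<bar>) GXp2"
    using a by (simp add: M_def L1_def L2_def)
  show "M (m, n) = replicate (nat \<bar>m\<bar>) (L1 (m, n)) @ replicate (nat \<bar>n\<bar>) GXp2"
    using a by (simp add: M_def L1_def L2_def)
qed
lemma M_m2: "n \<le> 0 \<Longrightarrow> M (m, - 1 + n) = replicate (nat \<bar>m\<bar>) (L1 (m, n)) @ GXm2 # replicate (nat \<bar>n\<bar>) GXm2"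
  "n \<le> 0 \<Longrightarrow> M (m, n) = replicate (nat \<bar>m\<bar>) (L1 (m, n)) @ replicate (nat \<bar>n\<bar>) GXm2"
proof -
  assume a: "n \<le> 0"
  then have "nat \<bar>- 1 + n\<bar> = Suc (nat \<bar>n\<bar>)" by simp
  then show "M (m, - 1 + n) = replicate (nat \<bar>m\<bar>) (L1 (m, n)) @ GXm2 # replicate (nat \<bar>n\<bar>) GXm2"
    using a by (simp add: M_def L1_def L2_def)
  show "M (m, n) = replicate (nat \<bar>m\<bar>) (L1 (m, n)) @ replicate (nat \<bar>n\<bar>) GXm2"
    using a rep_L2_neg[OF a, of m] by (simp add: M_def L1_def L2_def)
qed

lemma L1_cases: "L1 g = GXp1 \<or> L1 g = GXm1" by (simp add: L1_def)

context kfp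
begin

lemma swap1:
  assumes "y = GXp1 \<or> y = GXm1" "x = GXp2 \<or> x = GXm2" "p1 \<noteq> 0"
  shows "\<exists>d n. d \<noteq> 0 \<and> phi d * fgen x * fgen y \<approx> phi n * fgen y * fgen x"
proof -
  have c1: "x1 * y1 \<approx> phi (cq GXp1)" using contr[of GXp1] by simp
  have c2: "y1 * x1 \<approx> phi (cq GXm1)" using contr[of GXm1] by simp
  consider "y = GXp1" "x = GXp2" | "y = GXp1" "x = GXm2" | "y = GXm1" "x = GXp2" | "y = GXm1" "x = GXm2"
    using assms(1,2) by blast
  then show ?thesis
  proof cases
    case 1
    have "phi (cq GXp1) * x2 * x1 \<approx> (x1 * y1) * x2 * x1"
      by (intro ceq_multR ceq_sym[OF c1])
    also have "\<dots> = x1 * (y1 * x2) * x1" by (simp add: mult.assoc)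
    also have "\<dots> \<approx> x1 * (x2 * y1) * x1" by (intro ceq_multR ceq_multL R_c2)
    also have "\<dots> = wd [GXp1, GXp2] * (y1 * x1)" by (simp add: wd_Cons mult.assoc)
    also have "\<dots> \<approx> wd [GXp1, GXp2] * phi (cq GXm1)" by (intro ceq_multL c2)
    also have "\<dots> \<approx> phi (sh (- dsh (wdeg [GXp1, GXp2])) (cq GXm1)) * wd [GXp1, GXp2]" by (rule wd_phi)
    also have "\<dots> = phi (sh (- dsh (wdeg [GXp1, GXp2])) (cq GXm1)) * x1 * x2" by (simp add: wd_Cons mult.assoc)
    finally have E: "phi (cq GXp1) * x2 * x1 \<approx> phi (sh (- dsh (wdeg [GXp1, GXp2])) (cq GXm1)) * x1 * x2" .
    have "cq GXp1 \<noteq> 0" using assms(3) by (simp add: sh_nz)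
    then show ?thesis using 1 E by blast
  next
    case 2
    then show ?thesis using R_c1 by (intro exI[of _ 1]) (auto intro: ceq_sym)
  next
    case 3
    then show ?thesis using R_c2 by (intro exI[of _ 1]) (auto intro: ceq_sym)
  next
    case 4
    have "phi (cq GXm1) * y2 * y1 \<approx> (y1 * x1) * y2 * y1"
      by (intro ceq_multR ceq_sym[OF c2])
    also have "\<dots> = y1 * (x1 * y2) * y1" by (simp add: mult.assoc)
    also have "\<dots> \<approx> y1 * (y2 * x1) * y1" by (intro ceq_multR ceq_multL R_c1)
    also have "\<dots> = wd [GXm1, GXm2] * (x1 * y1)" by (simp add: wd_Cons mult.assoc)
    also have "\<dots> \<approx> wd [GXm1, GXm2] * phi (cq GXp1)" by (intro ceq_multL c1)
    also have "\<dots> \<approx> phi (sh (- dsh (wdeg [GXm1, GXm2])) (cq GXp1)) * wd [GXm1, GXm2]" by (rule wd_phi)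
    also have "\<dots> = phi (sh (- dsh (wdeg [GXm1, GXm2])) (cq GXp1)) * y1 * y2" by (simp add: wd_Cons mult.assoc)
    finally have E: "phi (cq GXm1) * y2 * y1 \<approx> phi (sh (- dsh (wdeg [GXm1, GXm2])) (cq GXp1)) * y1 * y2" .
    have "cq GXm1 \<noteq> 0" using assms(3) by (simp add: sh_nz)
    then show ?thesis using 4 E by blast
  qed
qed

lemma swap_pow:
  assumes "\<exists>d n. d \<noteq> 0 \<and> phi d * fgen x * fgen y \<approx> phi n * fgen y * fgen x"
  shows "\<exists>D N. D \<noteq> 0 \<and> phi D * fgen x * wd (replicate a y) \<approx> phi N * wd (replicate a y) * fgen x"
proof (induct a)
  case 0 then show ?case by (intro exI[of _ 1]) simp
next
  case (Suc a)
  obtain d n where dn: "d \<noteq> 0" "phi d * fgen x * fgen y \<approx> phi n * fgen y * fgen x" using assms by blast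
  obtain D N where DN: "D \<noteq> 0" "phi D * fgen x * wd (replicate a y) \<approx> phi N * wd (replicate a y) * fgen x"
    using Suc by blast
  let ?s = "- dsh (gdeg y)"
  let ?Y = "wd (replicate a y)"
  have "phi (sh ?s D * d) * fgen x * wd (replicate (Suc a) y) = phi (sh ?s D) * (phi d * fgen x * fgen y) * ?Y"
    by (simp add: phi_mult wd_Cons mult.assoc)
  also have "\<dots> \<approx> phi (sh ?s D) * (phi n * fgen y * fgen x) * ?Y"
    by (intro ceq_multR ceq_multL dn(2))
  also have "\<dots> = phi n * ((phi (sh ?s D) * fgen y) * fgen x * ?Y)"
    by (simp add: mult.assoc flip: mult.assoc[of "phi (sh ?s D)" "phi n"] phi_comm)
  also have "\<dots> \<approx> phi n * ((fgen y * phi D) * fgen x * ?Y)"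
    by (intro ceq_multR ceq_multL phi_gen')
  also have "\<dots> = phi n * fgen y * (phi D * fgen x * ?Y)" by (simp add: mult.assoc)
  also have "\<dots> \<approx> phi n * fgen y * (phi N * ?Y * fgen x)" by (intro ceq_multL DN(2))
  also have "\<dots> = phi n * (fgen y * phi N) * ?Y * fgen x" by (simp add: mult.assoc)
  also have "\<dots> \<approx> phi n * (phi (sh ?s N) * fgen y) * ?Y * fgen x"
    by (intro ceq_multR ceq_multL gen_phi)
  also have "\<dots> = phi (n * sh ?s N) * wd (replicate (Suc a) y) * fgen x"
    by (simp add: phi_mult wd_Cons mult.assoc)
  finally show ?case using dn(1) DN(1) by (intro exI[of _ "sh ?s D * d"] exI[of _ "n * sh ?s N"]) (simp add: sh_nz)
qed

lemma step_M:
  assumes "x \<noteq> GH" "nf (x # s)" "p1 \<noteq> 0"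
  shows "\<exists>D N. D \<noteq> 0 \<and> phi D * (fgen x * wd (M (wdeg s))) \<approx> phi N * wd (M (wdeg (x # s)))"
proof -
  obtain m n where g: "wdeg s = (m, n)" by (cases "wdeg s")
  show ?thesis
  proof (cases x)
    case GH then show ?thesis using assms by simp
  next
    case GXp1
    then have "GXm1 \<notin> set s" using assms(2) by (simp add: nf_def)
    then have "m \<ge> 0" using fst_nonneg[of s] g by simp
    then show ?thesis using GXp1 g M_p1[of m n] by (intro exI[of _ 1]) (simp add: wd_Cons)
  next
    case GXm1
    then have "GXp1 \<notin> set s" using assms(2) by (simp add: nf_def)
    then have "m \<le> 0" using fst_nonpos[of s] g by simp
    then show ?thesis using GXm1 g M_m1[of m n] by (intro exI[of _ 1]) (simp add: wd_Cons)
  next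
    case GXp2
    then have "GXm2 \<notin> set s" using assms(2) by (simp add: nf_def)
    then have n0: "n \<ge> 0" using snd_nonneg[of s] g by simp
    let ?A = "replicate (nat \<bar>m\<bar>) (L1 (m, n))"
    let ?B = "replicate (nat \<bar>n\<bar>) GXp2"
    obtain D N where DN: "D \<noteq> 0" "phi D * x2 * wd ?A \<approx> phi N * wd ?A * x2"
      using swap_pow[OF swap1[OF L1_cases _ assms(3)], of GXp2 "nat \<bar>m\<bar>" "(m, n)"] by auto
    have "phi D * (x2 * wd (M (m, n))) = (phi D * x2 * wd ?A) * wd ?B"
      using M_p2(2)[OF n0] by (simp add: wd_append mult.assoc)
    also have "\<dots> \<approx> (phi N * wd ?A * x2) * wd ?B" by (intro ceq_multR DN(2))
    also have "\<dots> = phi N * wd (M (m, 1 + n))"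
      using M_p2(1)[OF n0] by (simp add: wd_append wd_Cons mult.assoc)
    finally show ?thesis using GXp2 g DN(1) by auto
  next
    case GXm2
    then have "GXp2 \<notin> set s" using assms(2) by (simp add: nf_def)
    then have n0: "n \<le> 0" using snd_nonpos[of s] g by simp
    let ?A = "replicate (nat \<bar>m\<bar>) (L1 (m, n))"
    let ?B = "replicate (nat \<bar>n\<bar>) GXm2"
    obtain D N where DN: "D \<noteq> 0" "phi D * y2 * wd ?A \<approx> phi N * wd ?A * y2"
      using swap_pow[OF swap1[OF L1_cases _ assms(3)], of GXm2 "nat \<bar>m\<bar>" "(m, n)"] by auto
    have "phi D * (y2 * wd (M (m, n))) = (phi D * y2 * wd ?A) * wd ?B"
      using M_m2(2)[OF n0] by (simp add: wd_append mult.assoc)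
    also have "\<dots> \<approx> (phi N * wd ?A * y2) * wd ?B" by (intro ceq_multR DN(2))
    also have "\<dots> = phi N * wd (M (m, - 1 + n))"
      using M_m2(1)[OF n0] by (simp add: wd_append wd_Cons mult.assoc)
    finally show ?thesis using GXm2 g DN(1) by auto
  qed
qed

lemma nf_to_M:
  assumes "nf s" "p1 \<noteq> 0"
  shows "\<exists>D N. D \<noteq> 0 \<and> phi D * wd s \<approx> phi N * wd (M (wdeg s))"
  using assms(1)
proof (induct s)
  case Nil then show ?case by (intro exI[of _ 1]) (simp add: M_0)
next
  case (Cons x s)
  have xH: "x \<noteq> GH" using Cons.prems by (auto simp: nf_def)
  obtain D N where DN: "D \<noteq> 0" "phi D * wd s \<approx> phi N * wd (M (wdeg s))"
    using Cons.hyps[OF nf_Cons[OF Cons.prems]] by blast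
  obtain D2 N2 where DN2: "D2 \<noteq> 0" "phi D2 * (fgen x * wd (M (wdeg s))) \<approx> phi N2 * wd (M (wdeg (x # s)))"
    using step_M[OF xH Cons.prems assms(2)] by blast
  let ?s = "- dsh (gdeg x)"
  have "phi (D2 * sh ?s D) * wd (x # s) = phi D2 * ((phi (sh ?s D) * fgen x) * wd s)"
    by (simp add: phi_mult wd_Cons mult.assoc)
  also have "\<dots> \<approx> phi D2 * ((fgen x * phi D) * wd s)" by (intro ceq_multL ceq_multR phi_gen')
  also have "\<dots> = phi D2 * fgen x * (phi D * wd s)" by (simp add: mult.assoc)
  also have "\<dots> \<approx> phi D2 * fgen x * (phi N * wd (M (wdeg s)))" by (intro ceq_multL DN(2))
  also have "\<dots> = phi D2 * (fgen x * phi N) * wd (M (wdeg s))" by (simp add: mult.assoc)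
  also have "\<dots> \<approx> phi D2 * (phi (sh ?s N) * fgen x) * wd (M (wdeg s))"
    by (intro ceq_multL ceq_multR gen_phi)
  also have "\<dots> = (phi D2 * phi (sh ?s N)) * fgen x * wd (M (wdeg s))" by (simp add: mult.assoc)
  also have "\<dots> = (phi (sh ?s N) * phi D2) * fgen x * wd (M (wdeg s))" by (subst phi_comm) (rule refl)
  also have "\<dots> = phi (sh ?s N) * (phi D2 * (fgen x * wd (M (wdeg s))))" by (simp add: mult.assoc)
  also have "\<dots> \<approx> phi (sh ?s N) * (phi N2 * wd (M (wdeg (x # s))))" by (intro ceq_multL DN2(2))
  also have "\<dots> = phi (sh ?s N * N2) * wd (M (wdeg (x # s)))" by (simp add: phi_mult mult.assoc)
  finally have E: "phi (D2 * sh ?s D) * wd (x # s) \<approx> phi (sh ?s N * N2) * wd (M (wdeg (x # s)))" .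
  have "D2 * sh ?s D \<noteq> 0" using DN(1) DN2(1) by (simp add: sh_nz)
  then show ?case using E by blast
qed

end


lemma Hom_zero: "0 \<in> Hom g" by (simp add: Hom_def)
lemma Hom_add: "a \<in> Hom g \<Longrightarrow> b \<in> Hom g \<Longrightarrow> a + b \<in> Hom g"
  using keys_add[of a b] by (auto simp: Hom_def)
lemma Hom_uminus: "a \<in> Hom g \<Longrightarrow> - a \<in> Hom g"
  by (simp add: Hom_def)
lemma Hom_diff: "a \<in> Hom g \<Longrightarrow> b \<in> Hom g \<Longrightarrow> a - b \<in> Hom g"
  using keys_diff[of a b] by (auto simp: Hom_def)
lemma Hom_sum: "(\<And>i. i \<in> S \<Longrightarrow> f i \<in> Hom g) \<Longrightarrow> sum f S \<in> Hom g"
  by (induct S rule: infinite_finite_induct) (auto simp: Hom_zero Hom_add)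
lemma Hom_mult: "a \<in> Hom h \<Longrightarrow> b \<in> Hom k \<Longrightarrow> a * b \<in> Hom (fst h + fst k, snd h + snd k)"
proof -
  assume a: "a \<in> Hom h" and b: "b \<in> Hom k"
  show ?thesis unfolding Hom_def mem_Collect_eq
  proof
    fix w assume "w \<in> Poly_Mapping.keys (a * b)"
    then obtain u v where "w = u + v" "u \<in> Poly_Mapping.keys a" "v \<in> Poly_Mapping.keys b"
      using keys_mult[of a b] by blast
    then show "wdeg w = (fst h + fst k, snd h + snd k)"
      using a b by (simp add: Hom_def plus_list_def wdeg_append)
  qed
qed
lemma Hom_mult0: "a \<in> Hom (0, 0) \<Longrightarrow> b \<in> Hom k \<Longrightarrow> a * b \<in> Hom k"
  using Hom_mult[of a "(0,0)" b k] by simp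
lemma Hom_mult0': "a \<in> Hom k \<Longrightarrow> b \<in> Hom (0, 0) \<Longrightarrow> a * b \<in> Hom k"
  using Hom_mult[of a k b "(0,0)"] by simp
lemma Hom_sc: "sc c \<in> Hom (0, 0)" by (simp add: Hom_def)
lemma Hom_one: "1 \<in> Hom (0, 0)" using Hom_sc[of 1] by simp
lemma Hom_wd: "wd w \<in> Hom (wdeg w)" by (simp add: Hom_def)
lemma Hom_gen: "fgen x \<in> Hom (gdeg x)" using Hom_wd[of "[x]"] by (simp add: wd_single)
lemma Hom_pow0: "a \<in> Hom (0, 0) \<Longrightarrow> a ^ n \<in> Hom (0, 0)"
  by (induct n) (simp_all add: Hom_one Hom_mult0)
lemma Hom_peval0: "x \<in> Hom (0, 0) \<Longrightarrow> peval f x \<in> Hom (0, 0)"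
  by (simp add: peval_eq Hom_sum Hom_mult0 Hom_sc Hom_pow0)
lemma Hom_phi: "phi f \<in> Hom (0, 0)"
  unfolding phi_def by (rule Hom_peval0) (use Hom_gen[of GH] in simp)

lemma phi_sum: "phi (sum f S) = (\<Sum>i\<in>S. phi (f i))"
  by (induct S rule: infinite_finite_induct) (simp_all add: phi_add)

lemma bezout_fam:
  fixes N :: "'b \<Rightarrow> complex poly"
  assumes "finite S"
  shows "\<exists>c G. (\<Sum>s\<in>S. c s * N s) = G \<and> (\<forall>s\<in>S. G dvd N s) \<and> ((\<exists>s\<in>S. N s \<noteq> 0) \<longrightarrow> G \<noteq> 0)"
  using assms
proof (induct S rule: finite_induct)
  case empty then show ?case by (intro exI[of _ "\<lambda>_. 0"] exI[of _ 0]) simp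
next
  case (insert t S)
  then obtain c G where cG: "(\<Sum>s\<in>S. c s * N s) = G" "\<forall>s\<in>S. G dvd N s" "(\<exists>s\<in>S. N s \<noteq> 0) \<longrightarrow> G \<noteq> 0"
    by blast
  obtain u v where uv: "bezout_coefficients G (N t) = (u, v)" by (cases "bezout_coefficients G (N t)")
  have b: "u * G + v * N t = gcd G (N t)" by (rule bezout_coefficients[OF uv])
  define c' where "c' = (\<lambda>s. if s = t then v else u * c s)"
  have "(\<Sum>s\<in>insert t S. c' s * N s) = v * N t + (\<Sum>s\<in>S. u * c s * N s)"
    using insert.hyps by (simp add: c'_def) (intro sum.cong, auto)
  also have "(\<Sum>s\<in>S. u * c s * N s) = u * G" using cG(1) by (simp add: sum_distrib_left mult.assoc flip: cG(1))
  finally have 1: "(\<Sum>s\<in>insert t S. c' s * N s) = gcd G (N t)" using b by (simp add: add.commute)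
  have 2: "\<forall>s\<in>insert t S. gcd G (N t) dvd N s"
    using cG(2) by (auto intro: dvd_trans[OF gcd_dvd1])
  have 3: "(\<exists>s\<in>insert t S. N s \<noteq> 0) \<longrightarrow> gcd G (N t) \<noteq> 0"
    using cG(3) by auto
  show ?case using 1 2 3 by blast
qed

context kfp
begin

lemma opp_opp: "opp (opp x) = x" by (cases x) auto

definition pinv :: "falg \<Rightarrow> bool" where "pinv X \<longleftrightarrow> (\<exists>r. r \<noteq> 0 \<and> X \<approx> phi r)"

lemma pinv_ceq: "X \<approx> Y \<Longrightarrow> pinv Y \<Longrightarrow> pinv X"
  unfolding pinv_def using ceq_trans by blast

lemma pinv_sandwich:
  assumes "pinv X" "pinv (wd u * wd v)"
  shows "pinv (wd u * X * wd v)"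
proof -
  obtain r where r: "r \<noteq> 0" "X \<approx> phi r" using assms(1) by (auto simp: pinv_def)
  obtain r2 where r2: "r2 \<noteq> 0" "wd u * wd v \<approx> phi r2" using assms(2) by (auto simp: pinv_def)
  have "wd u * X * wd v \<approx> wd u * phi r * wd v" by (intro ceq_multR ceq_multL r(2))
  also have "\<dots> \<approx> phi (sh (- dsh (wdeg u)) r) * wd u * wd v" by (intro ceq_multR wd_phi)
  also have "\<dots> = phi (sh (- dsh (wdeg u)) r) * (wd u * wd v)" by (simp add: mult.assoc)
  also have "\<dots> \<approx> phi (sh (- dsh (wdeg u)) r) * phi r2" by (intro ceq_multL r2(2))
  also have "\<dots> = phi (sh (- dsh (wdeg u)) r * r2)" by (simp add: phi_mult)
  finally have E: "wd u * X * wd v \<approx> phi (sh (- dsh (wdeg u)) r * r2)" .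
  have "sh (- dsh (wdeg u)) r * r2 \<noteq> 0" using r(1) r2(1) by (simp add: sh_nz)
  then show ?thesis using E unfolding pinv_def by blast
qed

lemma pow_inv:
  assumes "x \<noteq> GH" "p1 \<noteq> 0" "p2 \<noteq> 0"
  shows "pinv (wd (replicate k (opp x)) * wd (replicate k x))"
proof (induct k)
  case 0 then show ?case unfolding pinv_def by (intro exI[of _ 1]) simp
next
  case (Suc k)
  have ox: "opp x \<noteq> GH" using assms(1) by (cases x) auto
  have "pinv (fgen (opp x) * fgen x)"
    unfolding pinv_def using contr[OF ox] cq_nz[OF assms(2,3), of "opp x"]
    by (intro exI[of _ "cq (opp x)"]) (simp add: opp_opp)
  then have "pinv (wd [opp x] * wd [x])" by (simp add: wd_single)
  then have "pinv (wd [opp x] * (wd (replicate k (opp x)) * wd (replicate k x)) * wd [x])"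
    by (rule pinv_sandwich[OF Suc])
  moreover have "wd (replicate (Suc k) (opp x)) * wd (replicate (Suc k) x)
     = wd [opp x] * (wd (replicate k (opp x)) * wd (replicate k x)) * wd [x]"
  proof -
    have 1: "replicate (Suc k) (opp x) = [opp x] @ replicate k (opp x)" by simp
    have 2: "replicate (Suc k) x = replicate k x @ [x]" by (simp add: replicate_append_same)
    show ?thesis by (simp only: 1 2 wd_append mult.assoc)
  qed
  ultimately show ?case by simp
qed

definition Mb :: "int \<times> int \<Rightarrow> gen list" where
  "Mb g = replicate (nat \<bar>snd g\<bar>) (opp (L2 g)) @ replicate (nat \<bar>fst g\<bar>) (opp (L1 g))"

lemma L1_nH: "L1 g \<noteq> GH" by (simp add: L1_def)
lemma L2_nH: "L2 g \<noteq> GH" by (simp add: L2_def)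

lemma M_inv_left:
  assumes "p1 \<noteq> 0" "p2 \<noteq> 0"
  shows "pinv (wd (Mb g) * wd (M g))"
proof -
  let ?A = "replicate (nat \<bar>fst g\<bar>) (L1 g)" and ?B = "replicate (nat \<bar>snd g\<bar>) (L2 g)"
  let ?Ab = "replicate (nat \<bar>fst g\<bar>) (opp (L1 g))" and ?Bb = "replicate (nat \<bar>snd g\<bar>) (opp (L2 g))"
  have "pinv (wd ?Bb * (wd ?Ab * wd ?A) * wd ?B)"
    by (rule pinv_sandwich[OF pow_inv[OF L1_nH assms] pow_inv[OF L2_nH assms]])
  then show ?thesis by (simp add: M_def Mb_def wd_append mult.assoc)
qed

lemma M_inv_right:
  assumes "p1 \<noteq> 0" "p2 \<noteq> 0"
  shows "pinv (wd (M g) * wd (Mb g))"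
proof -
  let ?A = "replicate (nat \<bar>fst g\<bar>) (L1 g)" and ?B = "replicate (nat \<bar>snd g\<bar>) (L2 g)"
  let ?Ab = "replicate (nat \<bar>fst g\<bar>) (opp (L1 g))" and ?Bb = "replicate (nat \<bar>snd g\<bar>) (opp (L2 g))"
  have o1: "opp (L1 g) \<noteq> GH" using L1_nH[of g] by (cases "L1 g") auto
  have o2: "opp (L2 g) \<noteq> GH" using L2_nH[of g] by (cases "L2 g") auto
  have "pinv (wd ?A * (wd ?B * wd ?Bb) * wd ?Ab)"
    using pinv_sandwich[OF pow_inv[OF o2 assms] pow_inv[OF o1 assms]] by (simp add: opp_opp)
  then show ?thesis by (simp add: M_def Mb_def wd_append mult.assoc)
qed

end


context kfp
begin

lemma gen_exists:
  assumes "p1 \<noteq> 0" "p2 \<noteq> 0"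
  shows "\<exists>a D G. a \<in> Hom g \<and> D \<noteq> 0 \<and> G \<noteq> 0 \<and> phi D * a \<approx> phi G * wd (M g) \<and>
     (\<forall>s. nf s \<and> wdeg s = g \<longrightarrow> (\<exists>q. wd s - phi q * a \<in> TT))"
proof -
  define S where "S = {s. nf s \<and> wdeg s = g}"
  have fin: "finite S" unfolding S_def by (rule finite_nf)
  have MS: "M g \<in> S" unfolding S_def by (simp add: nf_M wdeg_M)
  have "\<forall>s\<in>S. \<exists>DN. fst DN \<noteq> 0 \<and> phi (fst DN) * wd s \<approx> phi (snd DN) * wd (M g)"
  proof
    fix s assume "s \<in> S"
    then have "nf s" "wdeg s = g" by (auto simp: S_def)
    then show "\<exists>DN. fst DN \<noteq> 0 \<and> phi (fst DN) * wd s \<approx> phi (snd DN) * wd (M g)"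
      using nf_to_M[OF _ assms(1), of s] by auto
  qed
  then obtain f where f: "\<forall>s\<in>S. fst (f s) \<noteq> 0 \<and> phi (fst (f s)) * wd s \<approx> phi (snd (f s)) * wd (M g)"
    by (metis bchoice)
  define Df where "Df s = (if s = M g then 1 else fst (f s))" for s
  define Nf where "Nf s = (if s = M g then 1 else snd (f s))" for s
  have DN: "Df s \<noteq> 0" "phi (Df s) * wd s \<approx> phi (Nf s) * wd (M g)" if "s \<in> S" for s
    using f that by (auto simp: Df_def Nf_def)
  define D where "D = (\<Prod>s\<in>S. Df s)"
  define N' where "N' s = Nf s * (\<Prod>t\<in>S - {s}. Df t)" for s
  have Dnz: "D \<noteq> 0" unfolding D_def using fin DN(1) by (simp add: prod_zero_iff)
  have key: "phi D * wd s \<approx> phi (N' s) * wd (M g)" if s: "s \<in> S" for s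
  proof -
    have "D = Df s * (\<Prod>t\<in>S - {s}. Df t)" unfolding D_def using fin s by (simp add: prod.remove)
    then have "phi D * wd s = phi (\<Prod>t\<in>S - {s}. Df t) * (phi (Df s) * wd s)"
      by (simp add: phi_mult mult.assoc phi_comm[of "Df s"] flip: mult.assoc)
    also have "\<dots> \<approx> phi (\<Prod>t\<in>S - {s}. Df t) * (phi (Nf s) * wd (M g))"
      by (intro ceq_multL DN(2) s)
    also have "\<dots> = phi (N' s) * wd (M g)"
      by (simp add: N'_def phi_mult mult.assoc phi_comm[of "Nf s"] flip: mult.assoc)
    finally show ?thesis .
  qed
  obtain c G where cG: "(\<Sum>s\<in>S. c s * N' s) = G" "\<forall>s\<in>S. G dvd N' s" "(\<exists>s\<in>S. N' s \<noteq> 0) \<longrightarrow> G \<noteq> 0"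
    using bezout_fam[OF fin, of N'] by blast
  have "N' (M g) \<noteq> 0" unfolding N'_def using fin DN(1) by (simp add: Nf_def prod_zero_iff)
  then have Gnz: "G \<noteq> 0" using cG(3) MS by blast
  define a where "a = (\<Sum>s\<in>S. phi (c s) * wd s)"
  have aH: "a \<in> Hom g" unfolding a_def
  proof (rule Hom_sum)
    fix s assume "s \<in> S"
    then have "wdeg s = g" by (simp add: S_def)
    then have "wd s \<in> Hom g" using Hom_wd[of s] by simp
    then show "phi (c s) * wd s \<in> Hom g" by (rule Hom_mult0[OF Hom_phi])
  qed
  have Da: "phi D * a \<approx> phi G * wd (M g)"
  proof -
    have "phi D * a = (\<Sum>s\<in>S. phi (c s) * (phi D * wd s))"
      unfolding a_def by (simp add: sum_distrib_left mult.assoc phi_comm[of D] flip: mult.assoc)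
    also have "\<dots> \<approx> (\<Sum>s\<in>S. phi (c s) * (phi (N' s) * wd (M g)))"
      by (intro ceq_sum ceq_multL key)
    also have "\<dots> = phi (\<Sum>s\<in>S. c s * N' s) * wd (M g)"
      by (simp add: phi_sum sum_distrib_right phi_mult mult.assoc)
    finally show ?thesis using cG(1) by simp
  qed
  have spans: "\<exists>q. wd s - phi q * a \<in> TT" if "nf s" "wdeg s = g" for s
  proof -
    have s: "s \<in> S" using that by (simp add: S_def)
    obtain q where q: "N' s = G * q" using cG(2) s by (auto elim!: dvdE)
    have "phi D * (wd s - phi q * a) = phi D * wd s - phi q * (phi D * a)"
      by (simp add: right_diff_distrib mult.assoc phi_comm[of D] flip: mult.assoc)
    also have "\<dots> \<approx> phi (N' s) * wd (M g) - phi q * (phi G * wd (M g))"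
      by (intro ceq_diff key s ceq_multL Da)
    also have "\<dots> = 0" by (simp add: q phi_mult mult.assoc phi_comm[of G] flip: mult.assoc)
    finally have "phi D * (wd s - phi q * a) \<in> II" by (simp add: ceq_def)
    then show ?thesis using Dnz by (intro exI[of _ q] TT_I)
  qed
  show ?thesis using aH Dnz Gnz Da spans by blast
qed

lemma hom0:
  assumes "e \<in> Hom (0, 0)"
  shows "\<exists>E. e \<approx> phi E"
proof -
  have "\<forall>w\<in>Poly_Mapping.keys e. \<exists>c. wd w \<approx> phi c"
  proof
    fix w assume "w \<in> Poly_Mapping.keys e"
    then have wg: "wdeg w = (0, 0)" using assms by (simp add: Hom_def)
    obtain c s where cs: "nf s" "wdeg s = wdeg w" "wd w \<approx> phi c * wd s" using reduce[of w] by blast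
    then have "s = []" using wg nf_zero by simp
    then show "\<exists>c. wd w \<approx> phi c" using cs by auto
  qed
  then obtain C where C: "\<forall>w\<in>Poly_Mapping.keys e. wd w \<approx> phi (C w)" by (metis bchoice)
  have "e = (\<Sum>w\<in>Poly_Mapping.keys e. sc (Poly_Mapping.lookup e w) * wd w)" by (rule sum_single_wd)
  also have "\<dots> \<approx> (\<Sum>w\<in>Poly_Mapping.keys e. sc (Poly_Mapping.lookup e w) * phi (C w))"
    using C by (intro ceq_sum ceq_multL) auto
  also have "\<dots> = phi (\<Sum>w\<in>Poly_Mapping.keys e. smult (Poly_Mapping.lookup e w) (C w))"
    by (simp add: phi_sum phi_smult)
  finally show ?thesis by blast
qed

lemma TT_wd: "a \<in> TT \<Longrightarrow> wd w * a \<in> TT"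
  by (induct w) (simp_all add: wd_Cons mult.assoc TT_gen)

lemma TT_ceq': "a \<approx> b \<Longrightarrow> a \<in> TT \<Longrightarrow> b \<in> TT"
  using TT_ceq ceq_sym by blast

end


definition proj :: "int \<times> int \<Rightarrow> falg \<Rightarrow> falg" where
  "proj g a = (\<Sum>w\<in>{w\<in>Poly_Mapping.keys a. wdeg w = g}. Poly_Mapping.single w (Poly_Mapping.lookup a w))"

lemma lookup_proj: "Poly_Mapping.lookup (proj g a) w = (if wdeg w = g then Poly_Mapping.lookup a w else 0)"
  by (simp add: proj_def lookup_sum lookup_single when_def sum.delta' in_keys_iff)

lemma proj_add: "proj g (a + b) = proj g a + proj g b"
  by (rule poly_mapping_eqI) (simp add: lookup_proj lookup_add)
lemma proj_zero[simp]: "proj g 0 = 0"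
  by (rule poly_mapping_eqI) (simp add: lookup_proj)
lemma proj_sum: "proj g (sum f S) = (\<Sum>i\<in>S. proj g (f i))"
  by (induct S rule: infinite_finite_induct) (simp_all add: proj_add)

lemma Hom_lookup: "a \<in> Hom h \<Longrightarrow> wdeg w \<noteq> h \<Longrightarrow> Poly_Mapping.lookup a w = 0"
  by (auto simp: Hom_def in_keys_iff)

lemma proj_same: "a \<in> Hom g \<Longrightarrow> proj g a = a"
  by (rule poly_mapping_eqI) (auto simp: lookup_proj Hom_lookup)
lemma proj_other: "a \<in> Hom h \<Longrightarrow> h \<noteq> g \<Longrightarrow> proj g a = 0"
  by (rule poly_mapping_eqI) (auto simp: lookup_proj Hom_lookup)
lemma proj_Hom: "proj g a \<in> Hom g"
  by (auto simp: Hom_def in_keys_iff lookup_proj split: if_splits)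

lemma decomp: "a = (\<Sum>h\<in>wdeg ` Poly_Mapping.keys a. proj h a)"
proof (rule poly_mapping_eqI)
  fix w
  have "Poly_Mapping.lookup (\<Sum>h\<in>wdeg ` Poly_Mapping.keys a. proj h a) w =
        (\<Sum>h\<in>wdeg ` Poly_Mapping.keys a. if wdeg w = h then Poly_Mapping.lookup a w else 0)"
    by (simp add: lookup_sum lookup_proj)
  also have "\<dots> = (if wdeg w \<in> wdeg ` Poly_Mapping.keys a then Poly_Mapping.lookup a w else 0)"
    by (simp add: sum.delta)
  also have "\<dots> = Poly_Mapping.lookup a w"
    by (auto simp: in_keys_iff)
  finally show "Poly_Mapping.lookup a w = Poly_Mapping.lookup (\<Sum>h\<in>wdeg ` Poly_Mapping.keys a. proj h a) w" ..
qed

lemma Hom_mult': "a \<in> Hom h \<Longrightarrow> b \<in> Hom k \<Longrightarrow> g = (fst h + fst k, snd h + snd k) \<Longrightarrow> a * b \<in> Hom g"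
  using Hom_mult by simp

lemma Hom_hh: "hh \<in> Hom (0, 0)" using Hom_gen[of GH] by simp
lemma Hom_x1: "fgen GXp1 \<in> Hom (1, 0)" using Hom_gen[of GXp1] by simp
lemma Hom_y1: "fgen GXm1 \<in> Hom (-1, 0)" using Hom_gen[of GXm1] by simp
lemma Hom_x2: "fgen GXp2 \<in> Hom (0, 1)" using Hom_gen[of GXp2] by simp
lemma Hom_y2: "fgen GXm2 \<in> Hom (0, -1)" using Hom_gen[of GXm2] by simp

lemma Hom_pev: "peval p (hh - sc c) \<in> Hom (0, 0)" "peval p (hh + sc c) \<in> Hom (0, 0)"
  by (intro Hom_peval0 Hom_diff Hom_add Hom_hh Hom_sc)+

lemma Hom_comm_rel: "x \<in> Hom g \<Longrightarrow> hh * x - x * hh - sc c * x \<in> Hom g" "x \<in> Hom g \<Longrightarrow> hh * x - x * hh + sc c * x \<in> Hom g"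
  by (intro Hom_diff Hom_add Hom_mult0 Hom_mult0' Hom_hh Hom_sc; assumption)+

lemma rels_hom: "r \<in> rels a1 a2 p1 p2 \<Longrightarrow> \<exists>d. r \<in> Hom d"
proof -
  assume r: "r \<in> rels a1 a2 p1 p2"
  have 5: "fgen GXp1 * fgen GXm1 - peval p1 (hh - sc (a1 / 2)) \<in> Hom (0, 0)"
    by (intro Hom_diff Hom_mult'[OF Hom_x1 Hom_y1] Hom_pev) simp
  have 6: "fgen GXm1 * fgen GXp1 - peval p1 (hh + sc (a1 / 2)) \<in> Hom (0, 0)"
    by (intro Hom_diff Hom_mult'[OF Hom_y1 Hom_x1] Hom_pev) simp
  have 7: "fgen GXp2 * fgen GXm2 - peval p2 (hh - sc (a2 / 2)) \<in> Hom (0, 0)"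
    by (intro Hom_diff Hom_mult'[OF Hom_x2 Hom_y2] Hom_pev) simp
  have 8: "fgen GXm2 * fgen GXp2 - peval p2 (hh + sc (a2 / 2)) \<in> Hom (0, 0)"
    by (intro Hom_diff Hom_mult'[OF Hom_y2 Hom_x2] Hom_pev) simp
  have 9: "fgen GXp1 * fgen GXm2 - fgen GXm2 * fgen GXp1 \<in> Hom (1, -1)"
    by (intro Hom_diff Hom_mult'[OF Hom_x1 Hom_y2] Hom_mult'[OF Hom_y2 Hom_x1]) simp_all
  have 10: "fgen GXm1 * fgen GXp2 - fgen GXp2 * fgen GXm1 \<in> Hom (-1, 1)"
    by (intro Hom_diff Hom_mult'[OF Hom_y1 Hom_x2] Hom_mult'[OF Hom_x2 Hom_y1]) simp_all
  show ?thesis using r unfolding rels_def fmul_eq fscal_eq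
    using Hom_comm_rel[OF Hom_x1] Hom_comm_rel[OF Hom_y1] Hom_comm_rel[OF Hom_x2] Hom_comm_rel[OF Hom_y2]
      5 6 7 8 9 10 by blast
qed

context kfp
begin

lemma II_proj: "x \<in> II \<Longrightarrow> proj g x \<in> II"
proof -
  assume "x \<in> II"
  then show ?thesis unfolding Itil_def
  proof (induct rule: gen_ideal.induct)
    case zero then show ?case by (simp add: gen_ideal.zero)
  next
    case (add x y) then show ?case by (simp add: proj_add gen_ideal.add)
  next
    case (gen r a b)
    obtain d where d: "r \<in> Hom d" using rels_hom[OF gen] by blast
    let ?A = "wdeg ` Poly_Mapping.keys a" and ?B = "wdeg ` Poly_Mapping.keys b"
    have "fmul (fmul a r) b = (\<Sum>h\<in>?A. \<Sum>k\<in>?B. proj h a * r * proj k b)"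
      by (subst decomp[of a], subst decomp[of b]) (simp add: fmul_eq sum_distrib_left sum_distrib_right, rule sum.swap)
    then have "proj g (fmul (fmul a r) b) = (\<Sum>h\<in>?A. \<Sum>k\<in>?B. proj g (proj h a * r * proj k b))"
      by (simp add: proj_sum)
    also have "\<dots> \<in> II"
    proof (intro II_sum)
      fix h k
      have hom: "proj h a * r * proj k b \<in> Hom (fst h + fst d + fst k, snd h + snd d + snd k)"
        by (rule Hom_mult'[OF Hom_mult'[OF proj_Hom d refl] proj_Hom]) simp
      show "proj g (proj h a * r * proj k b) \<in> II"
      proof (cases "(fst h + fst d + fst k, snd h + snd d + snd k) = g")
        case True
        then show ?thesis using proj_same[OF hom] II_gen[OF gen] by simp
      next
        case False
        then show ?thesis using proj_other[OF hom False] II_zero by simp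
      qed
    qed
    finally show ?case unfolding Itil_def .
  qed
qed

lemma graded: "graded_quot TT"
  unfolding graded_quot_def
proof (intro allI impI ballI)
  fix x :: "int \<times> int \<Rightarrow> falg" and S g0
  assume fin: "finite S" and xh: "\<forall>g\<in>S. x g \<in> Hom g" and sm: "(\<Sum>g\<in>S. x g) \<in> TT" and g0: "g0 \<in> S"
  obtain f where f: "f \<noteq> 0" "phi f * (\<Sum>g\<in>S. x g) \<in> II" using sm by (rule TT_E)
  have "proj g0 (phi f * (\<Sum>g\<in>S. x g)) \<in> II" using f(2) by (rule II_proj)
  also have "proj g0 (phi f * (\<Sum>g\<in>S. x g)) = (\<Sum>g\<in>S. proj g0 (phi f * x g))"
    by (simp add: sum_distrib_left proj_sum)
  also have "\<dots> = (\<Sum>g\<in>S. if g = g0 then phi f * x g else 0)"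
  proof (rule sum.cong)
    fix g assume "g \<in> S"
    then have "phi f * x g \<in> Hom g" using xh by (intro Hom_mult0 Hom_phi) auto
    then show "proj g0 (phi f * x g) = (if g = g0 then phi f * x g else 0)"
    proof (cases "g = g0")
      case True then show ?thesis using proj_same[of "phi f * x g" g] \<open>phi f * x g \<in> Hom g\<close> by simp
    next
      case False then show ?thesis using proj_other[OF \<open>phi f * x g \<in> Hom g\<close> False] by simp
    qed
  qed simp
  also have "\<dots> = phi f * x g0" using fin g0 by (simp add: sum.delta')
  finally show "x g0 \<in> TT" using f(1) by (rule TT_I[rotated])
qed

end


context kfp
begin

lemma left_span:
  assumes sp: "\<forall>s. nf s \<and> wdeg s = g \<longrightarrow> (\<exists>q. wd s - phi q * a \<in> TT)" and d: "d \<in> Hom g"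
  shows "\<exists>E. d - phi E * a \<in> TT"
proof -
  have "\<forall>w\<in>Poly_Mapping.keys d. \<exists>Q. wd w - phi Q * a \<in> TT"
  proof
    fix w assume "w \<in> Poly_Mapping.keys d"
    then have wg: "wdeg w = g" using d by (simp add: Hom_def)
    obtain c s where cs: "nf s" "wdeg s = wdeg w" "wd w \<approx> phi c * wd s" using reduce[of w] by blast
    obtain q where q: "wd s - phi q * a \<in> TT" using sp cs(1,2) wg by blast
    have "(wd w - phi c * wd s) + phi c * (wd s - phi q * a) \<in> TT"
      using cs(3) q unfolding ceq_def by (rule TT_add[OF II_TT TT_phi])
    also have "(wd w - phi c * wd s) + phi c * (wd s - phi q * a) = wd w - phi (c * q) * a"
      by (simp add: right_diff_distrib phi_mult mult.assoc)
    finally show "\<exists>Q. wd w - phi Q * a \<in> TT" by blast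
  qed
  then obtain Q where Q: "\<forall>w\<in>Poly_Mapping.keys d. wd w - phi (Q w) * a \<in> TT" by (metis bchoice)
  define E where "E = (\<Sum>w\<in>Poly_Mapping.keys d. smult (Poly_Mapping.lookup d w) (Q w))"
  have "d - phi E * a = (\<Sum>w\<in>Poly_Mapping.keys d. sc (Poly_Mapping.lookup d w) * wd w)
      - (\<Sum>w\<in>Poly_Mapping.keys d. sc (Poly_Mapping.lookup d w) * (phi (Q w) * a))"
    by (subst sum_single_wd) (simp add: E_def phi_sum phi_smult sum_distrib_right mult.assoc)
  also have "\<dots> = (\<Sum>w\<in>Poly_Mapping.keys d. sc (Poly_Mapping.lookup d w) * (wd w - phi (Q w) * a))"
    by (simp add: sum_subtractf right_diff_distrib)
  also have "\<dots> \<in> TT" using Q by (intro TT_sum TT_sc) auto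
  finally show ?thesis by blast
qed

lemma crystalline:
  assumes p: "p1 \<noteq> 0" "p2 \<noteq> 0"
  shows "crystalline_quot TT"
  unfolding crystalline_quot_def
proof (intro conjI graded allI)
  fix g
  obtain a D G where a: "a \<in> Hom g" "D \<noteq> 0" "G \<noteq> 0" "phi D * a \<approx> phi G * wd (M g)"
     "\<forall>s. nf s \<and> wdeg s = g \<longrightarrow> (\<exists>q. wd s - phi q * a \<in> TT)"
    using gen_exists[OF p, of g] by blast
  obtain r where r: "r \<noteq> 0" "wd (Mb g) * wd (M g) \<approx> phi r" using M_inv_left[OF p, of g] by (auto simp: pinv_def)
  obtain r' where r': "r' \<noteq> 0" "wd (M g) * wd (Mb g) \<approx> phi r'" using M_inv_right[OF p, of g] by (auto simp: pinv_def)
  have canc: "phi E \<in> TT" if E: "phi E * a \<in> TT" for E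
  proof -
    have "phi D * (phi E * a) \<in> TT" using E by (rule TT_phi)
    moreover have "phi D * (phi E * a) \<approx> phi E * (phi G * wd (M g))"
    proof -
      have "phi D * (phi E * a) = phi E * (phi D * a)"
        by (simp add: phi_comm[of D E] flip: mult.assoc)
      also have "\<dots> \<approx> phi E * (phi G * wd (M g))" by (intro ceq_multL a(4))
      finally show ?thesis .
    qed
    ultimately have "phi E * (phi G * wd (M g)) \<in> TT" by (rule TT_ceq'[rotated])
    then have "phi E * (phi G * wd (M g)) * wd (Mb g) \<in> TT" by (rule TT_right)
    moreover have "phi E * (phi G * wd (M g)) * wd (Mb g) \<approx> phi (G * r') * phi E"
    proof -
      have "phi E * (phi G * wd (M g)) * wd (Mb g) = phi E * phi G * (wd (M g) * wd (Mb g))"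
        by (simp add: mult.assoc)
      also have "\<dots> \<approx> phi E * phi G * phi r'" by (intro ceq_multL r'(2))
      also have "\<dots> = phi (G * r') * phi E" by (simp add: phi_mult phi_comm[of E] mult.assoc)
      finally show ?thesis .
    qed
    ultimately have "phi (G * r') * phi E \<in> TT" by (rule TT_ceq'[rotated])
    moreover have "G * r' \<noteq> 0" using a(3) r'(1) by simp
    ultimately show ?thesis by (rule TT_cancel[rotated])
  qed
  show "\<exists>a\<in>Hom g.
          (\<forall>d\<in>Hom g. \<exists>e\<in>Hom (0, 0). d - fmul e a \<in> TT) \<and>
          (\<forall>d\<in>Hom g. \<exists>e\<in>Hom (0, 0). d - fmul a e \<in> TT) \<and>
          (\<forall>e\<in>Hom (0, 0). fmul e a \<in> TT \<longrightarrow> e \<in> TT) \<and>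
          (\<forall>e\<in>Hom (0, 0). fmul a e \<in> TT \<longrightarrow> e \<in> TT)"
  proof (intro bexI[OF _ a(1)] conjI ballI impI)
    fix d assume d: "d \<in> Hom g"
    obtain E where E: "d - phi E * a \<in> TT" using left_span[OF a(5) d] by blast
    then show "\<exists>e\<in>Hom (0, 0). d - fmul e a \<in> TT" by (intro bexI[OF _ Hom_phi]) (simp add: fmul_eq)
  next
    fix d assume d: "d \<in> Hom g"
    obtain E where E: "d - phi E * a \<in> TT" using left_span[OF a(5) d] by blast
    have "phi E * a - a * phi (sh (dsh g) E) \<in> II" using phi_hom[OF a(1)] unfolding ceq_def .
    then have "(d - phi E * a) + (phi E * a - a * phi (sh (dsh g) E)) \<in> TT"
      by (rule TT_add[OF E II_TT])
    then show "\<exists>e\<in>Hom (0, 0). d - fmul a e \<in> TT" by (intro bexI[OF _ Hom_phi]) (simp add: fmul_eq)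
  next
    fix e assume e: "e \<in> Hom (0, 0)" and ea: "fmul e a \<in> TT"
    obtain E where eE: "e \<approx> phi E" using hom0[OF e] by blast
    have "e * a \<approx> phi E * a" using eE by (rule ceq_multR)
    moreover have "e * a \<in> TT" using ea by (simp add: fmul_eq)
    ultimately have "phi E * a \<in> TT" by (rule TT_ceq')
    then have "phi E \<in> TT" by (rule canc)
    then show "e \<in> TT" using eE by (rule TT_ceq[rotated])
  next
    fix e assume e: "e \<in> Hom (0, 0)" and ea: "fmul a e \<in> TT"
    obtain E where eE: "e \<approx> phi E" using hom0[OF e] by blast
    let ?E1 = "sh (- dsh g) E"
    have "a * e \<approx> phi ?E1 * a"
      using ceq_trans[OF ceq_multL[OF eE] hom_phi[OF a(1)]] .
    moreover have "a * e \<in> TT" using ea by (simp add: fmul_eq)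
    ultimately have "phi ?E1 * a \<in> TT" by (rule TT_ceq')
    then have "phi ?E1 \<in> TT" by (rule canc)
    then have "phi ?E1 * wd (M g) \<in> TT" by (rule TT_right)
    moreover have "phi ?E1 * wd (M g) \<approx> wd (M g) * phi E"
      using phi_wd[of ?E1 "M g"] by (simp add: wdeg_M sh_inv)
    ultimately have "wd (M g) * phi E \<in> TT" by (rule TT_ceq'[rotated])
    then have "wd (Mb g) * (wd (M g) * phi E) \<in> TT" by (rule TT_wd)
    moreover have "wd (Mb g) * (wd (M g) * phi E) \<approx> phi r * phi E"
      by (simp add: ceq_multR r(2) flip: mult.assoc)
    ultimately have "phi r * phi E \<in> TT" by (rule TT_ceq'[rotated])
    then have "phi E \<in> TT" using r(1) by (rule TT_cancel[rotated])
    then show "e \<in> TT" using eE by (rule TT_ceq[rotated])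
  qed
qed

end

theorem mainTheorem9:
  fixes a1 a2 :: complex and p1 p2 :: "complex poly"
  assumes "p1 \<noteq> 0" and "p2 \<noteq> 0"
    and "pcompose p1 [:a2 / 2, 1:] * pcompose p2 [:a1 / 2, 1:]
         = pcompose p1 [:- a2 / 2, 1:] * pcompose p2 [:- a1 / 2, 1:]"
  shows "crystalline_quot (Jker a1 a2 p1 p2)"
  using kfp.crystalline[OF assms(1,2), of a1 a2] by (simp add: kfp.Jker_eq)


end
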